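(* Let $\mathcal{P}=(\{\mathcal{E}_k:k\in K\},\{M_0,M_1\})$ be a concurrent quantum program on a Hilbert space $\mathcal{H}$ of finite dimension $d$, with initial density operator $\rho_0$. Then $\mathcal{P}$ with input $\rho_0$ terminates in the fair schedule $F$ if and only if it terminates in the schedule $\Pi^\omega$.
   Context: $\mathcal{H}$ is a complex Hilbert space of finite dimension $d\ge1$. A super-operator is a completely positive trace-non-increasing linear map on operators on $\mathcal{H}$. A concurrent quantum program is $\mathcal{P}=(\{\mathcal{E}_k:k\in K\},\{M_0,M_1\})$ with $K=\{1,\dots,m\}$, each $\mathcal{E}_k$ a trace-preserving super-operator, and $M_0^\dagger M_0+M_1^\dagger M_1=I$. $\mathcal{F}_k(\rho)=\mathcal{E}_k(M_1\rho M_1^\dagger)$; for a finite string $f=s_1\cdots s_n$ over $K$, $\mathcal{F}_f=\mathcal{F}_{s_n}\circ\cdots\circ\mathcal{F}_{s_1}$. $S=K^\omega$; for $s\in S$, $s[n]$ is its prefix of length $n$. $\mathcal{P}$ with input $\rho_0$ terminates for $s$ if $\mathcal{F}_{s[n]}(\rho_0)=0$ for some $n\ge1$, and terminates in a schedule $A\subseteq S$ if it terminates for every $s\in A$. An infinite path $s$ is fair if every $k\in K$ occurs infinitely often in $s$; $F$ is the set of fair paths. $P_K$ is the set of permutations of $K$, viewed as strings $s_1s_2\cdots s_m$ in which each element of $K$ occurs exactly once. $\Pi=\{s_1\sigma_1s_2\sigma_2\cdots\sigma_{m-1}s_m:\ s_1\cdots s_m\in P_K,\ \sigma_i\in K^*,\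 |\sigma_i|<d\text{ for }1\le i<m\}$, and $\Pi^\omega$ is the set of infinite paths that are concatenations of infinitely many strings from $\Pi$. *)

theory Defs
  imports "Jordan_Normal_Form.Matrix"
begin

definition adj :: "complex mat \<Rightarrow> complex mat" where
  "adj A = mat (dim_col A) (dim_row A) (\<lambda>(i,j). cnj (A $$ (j,i)))"

definition positive_op :: "nat \<Rightarrow> complex mat \<Rightarrow> bool" where
  "positive_op n A \<longleftrightarrow> A \<in> carrier_mat n n \<and>
     (\<forall>v \<in> carrier_vec n.
        let z = (\<Sum>i<n. \<Sum>j<n. cnj (v $ i) * A $$ (i,j) * v $ j)
        in Im z = 0 \<and> Re z \<ge> 0)"

definition trace :: "complex mat \<Rightarrow> complex" where
  "trace A = (\<Sum>i<dim_row A. A $$ (i,i))"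

definition density_op :: "nat \<Rightarrow> complex mat \<Rightarrow> bool" where
  "density_op d \<rho> \<longleftrightarrow> positive_op d \<rho> \<and> trace \<rho> = 1"

definition linear_op_map :: "nat \<Rightarrow> (complex mat \<Rightarrow> complex mat) \<Rightarrow> bool" where
  "linear_op_map d E \<longleftrightarrow>
     (\<forall>A \<in> carrier_mat d d. E A \<in> carrier_mat d d) \<and>
     (\<forall>A \<in> carrier_mat d d. \<forall>B \<in> carrier_mat d d. E (A + B) = E A + E B) \<and>
     (\<forall>A \<in> carrier_mat d d. \<forall>c. E (c \<cdot>\<^sub>m A) = c \<cdot>\<^sub>m E A)"

(* (id_{C^n} \<otimes> E) acting on operators on C^n \<otimes> C^d = C^(n*d);
   basis vector |a> \<otimes> |k> is indexed by a*d+k *)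
definition ampliate :: "nat \<Rightarrow> nat \<Rightarrow> (complex mat \<Rightarrow> complex mat) \<Rightarrow> complex mat \<Rightarrow> complex mat" where
  "ampliate n d E X = mat (n*d) (n*d) (\<lambda>(i,j).
      E (mat d d (\<lambda>(k,l). X $$ ((i div d)*d + k, (j div d)*d + l))) $$ (i mod d, j mod d))"

definition completely_positive :: "nat \<Rightarrow> (complex mat \<Rightarrow> complex mat) \<Rightarrow> bool" where
  "completely_positive d E \<longleftrightarrow>
     (\<forall>n X. positive_op (n*d) X \<longrightarrow> positive_op (n*d) (ampliate n d E X))"

definition super_operator :: "nat \<Rightarrow> (complex mat \<Rightarrow> complex mat) \<Rightarrow> bool" where
  "super_operator d E \<longleftrightarrow> linear_op_map d E \<and> completely_positive d E \<and>
     (\<forall>\<rho>. positive_op d \<rho> \<longrightarrow> Re (trace (E \<rho>)) \<le> Re (trace \<rho>))"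

definition trace_preserving :: "nat \<Rightarrow> (complex mat \<Rightarrow> complex mat) \<Rightarrow> bool" where
  "trace_preserving d E \<longleftrightarrow> (\<forall>A \<in> carrier_mat d d. trace (E A) = trace A)"

definition Fk :: "(nat \<Rightarrow> complex mat \<Rightarrow> complex mat) \<Rightarrow> complex mat \<Rightarrow> nat \<Rightarrow> complex mat \<Rightarrow> complex mat" where
  "Fk E M1 k \<rho> = E k (M1 * \<rho> * adj M1)"

definition Fstr :: "(nat \<Rightarrow> complex mat \<Rightarrow> complex mat) \<Rightarrow> complex mat \<Rightarrow> nat list \<Rightarrow> complex mat \<Rightarrow> complex mat" where
  "Fstr E M1 f \<rho> = fold (Fk E M1) f \<rho>"

definition prefix :: "(nat \<Rightarrow> nat) \<Rightarrow> nat \<Rightarrow> nat list" where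
  "prefix s n = map s [0..<n]"

definition paths :: "nat \<Rightarrow> (nat \<Rightarrow> nat) set" where
  "paths m = {s. \<forall>i. s i \<in> {1..m}}"

definition terminates_for :: "nat \<Rightarrow> (nat \<Rightarrow> complex mat \<Rightarrow> complex mat) \<Rightarrow> complex mat \<Rightarrow> complex mat \<Rightarrow> (nat \<Rightarrow> nat) \<Rightarrow> bool" where
  "terminates_for d E M1 \<rho>0 s \<longleftrightarrow> (\<exists>n\<ge>1. Fstr E M1 (prefix s n) \<rho>0 = 0\<^sub>m d d)"

definition terminates_in :: "nat \<Rightarrow> (nat \<Rightarrow> complex mat \<Rightarrow> complex mat) \<Rightarrow> complex mat \<Rightarrow> complex mat \<Rightarrow> (nat \<Rightarrow> nat) set \<Rightarrow> bool" where
  "terminates_in d E M1 \<rho>0 A \<longleftrightarrow> (\<forall>s \<in> A. terminates_for d E M1 \<rho>0 s)"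

definition fair_paths :: "nat \<Rightarrow> (nat \<Rightarrow> nat) set" where
  "fair_paths m = {s \<in> paths m. \<forall>k \<in> {1..m}. infinite {i. s i = k}}"

definition perms :: "nat \<Rightarrow> nat list set" where
  "perms m = {p. distinct p \<and> set p = {1..m}}"

(* Pi = { s_1 sigma_1 s_2 sigma_2 ... sigma_(m-1) s_m } *)
definition Pi_set :: "nat \<Rightarrow> nat \<Rightarrow> nat list set" where
  "Pi_set m d = {w. \<exists>p \<in> perms m. \<exists>\<sigma> :: nat \<Rightarrow> nat list.
      (\<forall>i < m - 1. set (\<sigma> i) \<subseteq> {1..m} \<and> length (\<sigma> i) < d) \<and>
      w = concat (map (\<lambda>i. [p ! i] @ (if i < m - 1 then \<sigma> i else [])) [0..<m])}"

(* infinite paths that are concatenations of infinitely many strings from Pi *)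
definition Pi_omega :: "nat \<Rightarrow> nat \<Rightarrow> (nat \<Rightarrow> nat) set" where
  "Pi_omega m d = {s. \<exists>ws :: nat \<Rightarrow> nat list. \<exists>b :: nat \<Rightarrow> nat.
      (\<forall>i. ws i \<in> Pi_set m d) \<and> b 0 = 0 \<and>
      (\<forall>i. b (Suc i) = b i + length (ws i)) \<and>
      (\<forall>i j. j < length (ws i) \<longrightarrow> s (b i + j) = ws i ! j)}"

end

theory Submission
  imports Defs "Jordan_Normal_Form.VS_Connect"
begin


definition bf :: "nat \<Rightarrow> complex mat \<Rightarrow> complex vec \<Rightarrow> complex vec \<Rightarrow> complex" where
  "bf n A u w = (\<Sum>i<n. \<Sum>j<n. cnj (u $ i) * A $$ (i,j) * w $ j)"

definition nn :: "complex \<Rightarrow> bool" where "nn z \<longleftrightarrow> Im z = 0 \<and> Re z \<ge> 0"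

lemma psd_def2: "positive_op n A \<longleftrightarrow> A \<in> carrier_mat n n \<and> (\<forall>v\<in>carrier_vec n. nn (bf n A v v))"
  unfolding positive_op_def bf_def nn_def Let_def by simp

lemma nn_add: "nn a \<Longrightarrow> nn b \<Longrightarrow> nn (a+b)" by (simp add: nn_def)
lemma nn_mult: "c \<ge> 0 \<Longrightarrow> nn a \<Longrightarrow> nn (complex_of_real c * a)" by (simp add: nn_def)
lemma nn_0: "nn 0" by (simp add: nn_def)
lemma nn_real: "nn a \<Longrightarrow> a = complex_of_real (Re a)" by (simp add: nn_def complex_eq_iff)
lemma nn_zero: "nn a \<Longrightarrow> nn (-a) \<Longrightarrow> a = 0" by (simp add: nn_def complex_eq_iff)

lemma bf_add_mat: "A \<in> carrier_mat n n \<Longrightarrow> B \<in> carrier_mat n n \<Longrightarrow> bf n (A + B) u w = bf n A u w + bf n B u w"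
proof -
  assume c: "A \<in> carrier_mat n n" "B \<in> carrier_mat n n"
  have "bf n (A + B) u w = (\<Sum>i<n. \<Sum>j<n. cnj (u $ i) * A $$ (i,j) * w $ j + cnj (u $ i) * B $$ (i,j) * w $ j)"
    unfolding bf_def using c by (intro sum.cong refl) (simp add: distrib_left distrib_right)
  also have "\<dots> = bf n A u w + bf n B u w" unfolding bf_def by (simp add: sum.distrib)
  finally show ?thesis .
qed
lemma bf_minus_mat: "A \<in> carrier_mat n n \<Longrightarrow> B \<in> carrier_mat n n \<Longrightarrow> bf n (A - B) u w = bf n A u w - bf n B u w"
proof -
  assume c: "A \<in> carrier_mat n n" "B \<in> carrier_mat n n"
  have "bf n (A - B) u w = (\<Sum>i<n. \<Sum>j<n. cnj (u $ i) * A $$ (i,j) * w $ j - cnj (u $ i) * B $$ (i,j) * w $ j)"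
    unfolding bf_def using c by (intro sum.cong refl) (simp add: right_diff_distrib left_diff_distrib)
  also have "\<dots> = bf n A u w - bf n B u w" unfolding bf_def by (simp add: sum_subtractf)
  finally show ?thesis .
qed
lemma bf_smult_mat: "A \<in> carrier_mat n n \<Longrightarrow> bf n (c \<cdot>\<^sub>m A) u w = c * bf n A u w"
  unfolding bf_def by (auto simp: sum_distrib_left algebra_simps intro!: sum.cong)
lemma bf_uminus_mat: "A \<in> carrier_mat n n \<Longrightarrow> bf n (- A) u w = - bf n A u w"
proof -
  assume c: "A \<in> carrier_mat n n"
  have "bf n (- A) u w = (\<Sum>i<n. \<Sum>j<n. - (cnj (u $ i) * A $$ (i,j) * w $ j))"
    unfolding bf_def using c by (intro sum.cong refl) simp
  also have "\<dots> = - bf n A u w" unfolding bf_def by (simp add: sum_negf)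
  finally show ?thesis .
qed
lemma bf_zero_mat: "bf n (0\<^sub>m n n) u w = 0"
  unfolding bf_def by (auto intro!: sum.neutral)

lemma bf_addL: "u \<in> carrier_vec n \<Longrightarrow> w \<in> carrier_vec n \<Longrightarrow> bf n A (u + w) v = bf n A u v + bf n A w v"
proof -
  assume c: "u \<in> carrier_vec n" "w \<in> carrier_vec n"
  have "bf n A (u + w) v = (\<Sum>i<n. \<Sum>j<n. cnj (u $ i) * A $$ (i,j) * v $ j + cnj (w $ i) * A $$ (i,j) * v $ j)"
    unfolding bf_def using c by (intro sum.cong refl) (simp add: distrib_left distrib_right)
  also have "\<dots> = bf n A u v + bf n A w v" unfolding bf_def by (simp add: sum.distrib)
  finally show ?thesis .
qed
lemma bf_addR: "u \<in> carrier_vec n \<Longrightarrow> w \<in> carrier_vec n \<Longrightarrow> bf n A v (u + w) = bf n A v u + bf n A v w"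
proof -
  assume c: "u \<in> carrier_vec n" "w \<in> carrier_vec n"
  have "bf n A v (u + w) = (\<Sum>i<n. \<Sum>j<n. cnj (v $ i) * A $$ (i,j) * u $ j + cnj (v $ i) * A $$ (i,j) * w $ j)"
    unfolding bf_def using c by (intro sum.cong refl) (simp add: distrib_left distrib_right)
  also have "\<dots> = bf n A v u + bf n A v w" unfolding bf_def by (simp add: sum.distrib)
  finally show ?thesis .
qed
lemma bf_smultL: "u \<in> carrier_vec n \<Longrightarrow> bf n A (c \<cdot>\<^sub>v u) v = cnj c * bf n A u v"
  unfolding bf_def by (auto simp: sum_distrib_left algebra_simps intro!: sum.cong)
lemma bf_smultR: "u \<in> carrier_vec n \<Longrightarrow> bf n A v (c \<cdot>\<^sub>v u) = c * bf n A v u"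
  unfolding bf_def by (auto simp: sum_distrib_left algebra_simps intro!: sum.cong)

lemma bf_unit: "i < n \<Longrightarrow> j < n \<Longrightarrow> bf n A (unit_vec n i) (unit_vec n j) = A $$ (i,j)"
proof -
  assume ij: "i < n" "j < n"
  have "bf n A (unit_vec n i) (unit_vec n j) = (\<Sum>k<n. if k = i then A $$ (k,j) else 0)"
    unfolding bf_def
  proof (rule sum.cong[OF refl])
    fix k assume k: "k \<in> {..<n}"
    have "(\<Sum>l<n. cnj (unit_vec n i $ k) * A $$ (k, l) * unit_vec n j $ l) = (\<Sum>l<n. if l = j then cnj (unit_vec n i $ k) * A $$ (k, l) else 0)"
      using k by (intro sum.cong) (auto simp: unit_vec_def)
    also have "\<dots> = cnj (unit_vec n i $ k) * A $$ (k, j)" using ij by simp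
    finally show "(\<Sum>l<n. cnj (unit_vec n i $ k) * A $$ (k, l) * unit_vec n j $ l) = (if k = i then A $$ (k,j) else 0)"
      using k by (simp add: unit_vec_def)
  qed
  also have "\<dots> = A $$ (i,j)" using ij by simp
  finally show ?thesis .
qed

lemma bf_expand:
  assumes "u \<in> carrier_vec n" "w \<in> carrier_vec n"
  shows "bf n A (u + z \<cdot>\<^sub>v w) (u + z \<cdot>\<^sub>v w) = bf n A u u + z * bf n A u w + cnj z * bf n A w u + cnj z * z * bf n A w w"
  using assms by (simp add: bf_addL bf_addR bf_smultL bf_smultR algebra_simps)

lemma psd_herm:
  assumes "positive_op n A" "u \<in> carrier_vec n" "w \<in> carrier_vec n"
  shows "bf n A w u = cnj (bf n A u w)"
proof -
  have P: "\<And>v. v \<in> carrier_vec n \<Longrightarrow> nn (bf n A v v)" using assms(1) psd_def2 by auto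
  have 1: "nn (bf n A (u + 1 \<cdot>\<^sub>v w) (u + 1 \<cdot>\<^sub>v w))" using assms by (intro P) auto
  have 2: "nn (bf n A (u + \<i> \<cdot>\<^sub>v w) (u + \<i> \<cdot>\<^sub>v w))" using assms by (intro P) auto
  have uu: "nn (bf n A u u)" "nn (bf n A w w)" using assms P by auto
  show ?thesis using 1 2 uu unfolding bf_expand[OF assms(2,3)]
    by (simp add: nn_def complex_eq_iff algebra_simps)
qed


lemma psd_cs:
  assumes A: "positive_op n A" and u: "u \<in> carrier_vec n" and w: "w \<in> carrier_vec n"
  shows "(cmod (bf n A u w))^2 \<le> Re (bf n A u u) * Re (bf n A w w)"
proof -
  define a where "a = bf n A u w"
  define p where "p = Re (bf n A u u)"
  define q where "q = Re (bf n A w w)"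
  have P: "\<And>v. v \<in> carrier_vec n \<Longrightarrow> nn (bf n A v v)" using A psd_def2 by auto
  have pu: "bf n A u u = of_real p" using P[OF u] nn_real p_def by auto
  have qw: "bf n A w w = of_real q" using P[OF w] nn_real q_def by auto
  have p0: "p \<ge> 0" "q \<ge> 0" using P u w by (auto simp: nn_def p_def q_def)
  have wu: "bf n A w u = cnj a" using psd_herm[OF A u w] a_def by simp
  have H: "0 \<le> p - 2*t*(cmod a)^2 + t^2*(cmod a)^2*q" for t :: real
  proof -
    define z where "z = - (of_real t * cnj a)"
    have "bf n A (u + z \<cdot>\<^sub>v w) (u + z \<cdot>\<^sub>v w) = of_real (p - 2*t*(cmod a)^2 + t^2*(cmod a)^2*q)"
      unfolding bf_expand[OF u w] pu qw wu a_def[symmetric] z_def cmod_power2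
      by (simp add: complex_eq_iff algebra_simps power2_eq_square)
    moreover have "nn (bf n A (u + z \<cdot>\<^sub>v w) (u + z \<cdot>\<^sub>v w))" using u w by (intro P) auto
    ultimately show ?thesis by (simp add: nn_def)
  qed
  show ?thesis
  proof (cases "cmod a = 0")
    case True then show ?thesis using p0 by (simp add: a_def p_def q_def)
  next
    case False
    hence c: "(cmod a)^2 > 0" by simp
    show ?thesis
    proof (cases "q = 0")
      case True
      from H[of "(p+1)/(2*(cmod a)^2)"] True c have False by (simp add: field_simps)
      then show ?thesis ..
    next
      case False
      with p0 have q: "q > 0" by simp
      from H[of "1/q"] q have "0 \<le> p - (cmod a)^2/q" by (simp add: field_simps power2_eq_square)
      then have "(cmod a)^2 \<le> p * q" using q by (simp add: field_simps)
      then show ?thesis by (simp add: a_def p_def q_def)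
    qed
  qed
qed

lemma psd_carrier: "positive_op n A \<Longrightarrow> A \<in> carrier_mat n n" by (simp add: positive_op_def)

lemma psd_nn: "positive_op n A \<Longrightarrow> v \<in> carrier_vec n \<Longrightarrow> nn (bf n A v v)"
  by (simp add: psd_def2)

lemma psd_entry_bound:
  assumes A: "positive_op n A" and ij: "i < n" "j < n"
  shows "(cmod (A $$ (i,j)))^2 \<le> Re (A $$ (i,i)) * Re (A $$ (j,j))"
  using psd_cs[OF A, of "unit_vec n i" "unit_vec n j"] ij by (simp add: bf_unit)

lemma psd_quad_zero:
  assumes A: "positive_op n A" and z: "\<And>v. v \<in> carrier_vec n \<Longrightarrow> bf n A v v = 0"
  shows "A = 0\<^sub>m n n"
proof (rule eq_matI)
  show "dim_row A = dim_row (0\<^sub>m n n)" "dim_col A = dim_col (0\<^sub>m n n)" using psd_carrier[OF A] by auto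
  fix i j assume "i < dim_row (0\<^sub>m n n)" "j < dim_col (0\<^sub>m n n)"
  hence ij: "i < n" "j < n" by auto
  have "(cmod (A $$ (i,j)))^2 \<le> 0" using psd_entry_bound[OF A ij] z[of "unit_vec n i"] z[of "unit_vec n j"] ij
    by (simp add: bf_unit)
  hence "A $$ (i,j) = 0" by simp
  thus "A $$ (i,j) = 0\<^sub>m n n $$ (i,j)" using ij by simp
qed

lemma psd_diag_zero:
  assumes A: "positive_op n A" and z: "\<And>i. i < n \<Longrightarrow> A $$ (i,i) = 0"
  shows "A = 0\<^sub>m n n"
proof (rule eq_matI)
  show "dim_row A = dim_row (0\<^sub>m n n)" "dim_col A = dim_col (0\<^sub>m n n)" using psd_carrier[OF A] by auto
  fix i j assume "i < dim_row (0\<^sub>m n n)" "j < dim_col (0\<^sub>m n n)"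
  hence ij: "i < n" "j < n" by auto
  have "(cmod (A $$ (i,j)))^2 \<le> 0" using psd_entry_bound[OF A ij] z ij by simp
  hence "A $$ (i,j) = 0" by simp
  thus "A $$ (i,j) = 0\<^sub>m n n $$ (i,j)" using ij by simp
qed

lemma psd_intro: "A \<in> carrier_mat n n \<Longrightarrow> (\<And>v. v \<in> carrier_vec n \<Longrightarrow> nn (bf n A v v)) \<Longrightarrow> positive_op n A"
  by (simp add: psd_def2)

lemma psd_neg_zero:
  assumes A: "positive_op n A" and B: "positive_op n (- A)"
  shows "A = 0\<^sub>m n n"
proof (rule psd_quad_zero[OF A])
  fix v :: "complex vec" assume v: "v \<in> carrier_vec n"
  have "nn (- bf n A v v)" using psd_nn[OF B v] bf_uminus_mat[OF psd_carrier[OF A]] by simp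
  thus "bf n A v v = 0" using psd_nn[OF A v] nn_zero by blast
qed

lemma psd_zero: "positive_op n (0\<^sub>m n n)"
  by (intro psd_intro) (auto simp: bf_zero_mat nn_0)

lemma psd_add: "positive_op n A \<Longrightarrow> positive_op n B \<Longrightarrow> positive_op n (A + B)"
  by (intro psd_intro) (auto simp: bf_add_mat psd_carrier psd_nn intro!: nn_add)

lemma psd_smult: "c \<ge> 0 \<Longrightarrow> positive_op n A \<Longrightarrow> positive_op n (complex_of_real c \<cdot>\<^sub>m A)"
  by (intro psd_intro) (auto simp: bf_smult_mat psd_carrier psd_nn intro!: nn_mult)

definition outv :: "nat \<Rightarrow> complex vec \<Rightarrow> complex mat" where
  "outv n v = mat n n (\<lambda>(i,j). v $ i * cnj (v $ j))"

definition sv :: "nat \<Rightarrow> complex vec \<Rightarrow> complex vec \<Rightarrow> complex" where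
  "sv n y v = (\<Sum>k<n. cnj (y $ k) * v $ k)"

lemma outv_carrier[simp]: "outv n v \<in> carrier_mat n n" by (simp add: outv_def)

lemma bf_outv: "bf n (outv n v) y y = of_real ((cmod (sv n y v))^2)"
proof -
  have "bf n (outv n v) y y = (\<Sum>i<n. \<Sum>j<n. (cnj (y $ i) * v $ i) * (cnj (v $ j) * y $ j))"
    unfolding bf_def outv_def by (intro sum.cong refl) (simp add: algebra_simps)
  also have "\<dots> = (\<Sum>k<n. cnj (y $ k) * v $ k) * (\<Sum>k<n. cnj (v $ k) * y $ k)"
    by (rule sum_product[symmetric])
  also have "\<dots> = sv n y v * cnj (sv n y v)"
    unfolding sv_def by (simp add: mult.commute)
  also have "\<dots> = of_real ((cmod (sv n y v))^2)" by (simp add: complex_norm_square[symmetric])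
  finally show ?thesis .
qed

lemma psd_outv: "positive_op n (outv n v)"
  by (intro psd_intro) (auto simp: bf_outv nn_def)

lemma sv_add: "u \<in> carrier_vec n \<Longrightarrow> w \<in> carrier_vec n \<Longrightarrow> sv n y (u + w) = sv n y u + sv n y w"
proof -
  assume c: "u \<in> carrier_vec n" "w \<in> carrier_vec n"
  have "sv n y (u + w) = (\<Sum>k<n. cnj (y $ k) * u $ k + cnj (y $ k) * w $ k)"
    unfolding sv_def using c by (intro sum.cong refl) (simp add: distrib_left)
  thus ?thesis by (simp add: sv_def sum.distrib)
qed

lemma sv_smult: "u \<in> carrier_vec n \<Longrightarrow> sv n y (c \<cdot>\<^sub>v u) = c * sv n y u"
  unfolding sv_def by (auto simp: sum_distrib_left algebra_simps intro!: sum.cong)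


declare minus_carrier_mat[simp]

definition qf :: "nat \<Rightarrow> complex mat \<Rightarrow> complex vec \<Rightarrow> real" where
  "qf n A v = Re (bf n A v v)"

definition domi :: "nat \<Rightarrow> complex mat \<Rightarrow> complex mat \<Rightarrow> bool" where
  "domi n A B \<longleftrightarrow> (\<exists>c\<ge>0. positive_op n (complex_of_real c \<cdot>\<^sub>m B - A))"

definition SuppV :: "nat \<Rightarrow> complex mat \<Rightarrow> complex vec set" where
  "SuppV n X = {v \<in> carrier_vec n. domi n (outv n v) X}"

lemma psd_bf_real: "positive_op n A \<Longrightarrow> v \<in> carrier_vec n \<Longrightarrow> bf n A v v = of_real (qf n A v)"
  using psd_nn nn_real qf_def by metis

lemma psd_qf_nonneg: "positive_op n A \<Longrightarrow> v \<in> carrier_vec n \<Longrightarrow> qf n A v \<ge> 0"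
  using psd_nn nn_def qf_def by metis

lemma psd_iff_qf:
  assumes "A \<in> carrier_mat n n" "\<And>v. v \<in> carrier_vec n \<Longrightarrow> Im (bf n A v v) = 0"
  shows "positive_op n A \<longleftrightarrow> (\<forall>v\<in>carrier_vec n. qf n A v \<ge> 0)"
  using assms by (auto simp: psd_def2 nn_def qf_def)

lemma domi_iff:
  assumes A: "positive_op n A" and B: "positive_op n B"
  shows "domi n A B \<longleftrightarrow> (\<exists>c\<ge>0. \<forall>v\<in>carrier_vec n. qf n A v \<le> c * qf n B v)"
proof -
  have cA: "A \<in> carrier_mat n n" and cB: "B \<in> carrier_mat n n" using A B psd_carrier by auto
  have "positive_op n (complex_of_real c \<cdot>\<^sub>m B - A) \<longleftrightarrow> (\<forall>v\<in>carrier_vec n. qf n A v \<le> c * qf n B v)" for c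
  proof -
    have e: "bf n (complex_of_real c \<cdot>\<^sub>m B - A) v v = of_real (c * qf n B v - qf n A v)" if v: "v \<in> carrier_vec n" for v
      using bf_minus_mat[of "complex_of_real c \<cdot>\<^sub>m B" n A] cA cB bf_smult_mat[OF cB]
        psd_bf_real[OF A v] psd_bf_real[OF B v] by simp
    have "positive_op n (complex_of_real c \<cdot>\<^sub>m B - A) \<longleftrightarrow> (\<forall>v\<in>carrier_vec n. qf n (complex_of_real c \<cdot>\<^sub>m B - A) v \<ge> 0)"
      by (rule psd_iff_qf) (use cA cB e in auto)
    also have "\<dots> \<longleftrightarrow> (\<forall>v\<in>carrier_vec n. qf n A v \<le> c * qf n B v)"
      using e by (auto simp: qf_def)
    finally show ?thesis .
  qed
  thus ?thesis unfolding domi_def by auto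
qed

lemma qf_add: "A \<in> carrier_mat n n \<Longrightarrow> B \<in> carrier_mat n n \<Longrightarrow> qf n (A + B) v = qf n A v + qf n B v"
  by (simp add: qf_def bf_add_mat)
lemma qf_minus: "A \<in> carrier_mat n n \<Longrightarrow> B \<in> carrier_mat n n \<Longrightarrow> qf n (A - B) v = qf n A v - qf n B v"
  by (simp add: qf_def bf_minus_mat)
lemma qf_zero: "qf n (0\<^sub>m n n) v = 0"
  by (simp add: qf_def bf_zero_mat)
lemma qf_outv: "qf n (outv n v) y = (cmod (sv n y v))^2"
  by (simp add: qf_def bf_outv)

lemma psd_by_qf:
  assumes "A \<in> carrier_mat n n" "\<And>v. v \<in> carrier_vec n \<Longrightarrow> bf n A v v = of_real (qf n A v)"
    "\<And>v. v \<in> carrier_vec n \<Longrightarrow> qf n A v \<ge> 0"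
  shows "positive_op n A"
  using assms by (auto simp: psd_def2 nn_def)

lemma domi_trans:
  assumes A: "positive_op n A" and B: "positive_op n B" and C: "positive_op n C"
    and ab: "domi n A B" and bc: "domi n B C"
  shows "domi n A C"
proof -
  obtain c1 where c1: "c1 \<ge> 0" "\<forall>v\<in>carrier_vec n. qf n A v \<le> c1 * qf n B v" using ab domi_iff[OF A B] by auto
  obtain c2 where c2: "c2 \<ge> 0" "\<forall>v\<in>carrier_vec n. qf n B v \<le> c2 * qf n C v" using bc domi_iff[OF B C] by auto
  have "\<forall>v\<in>carrier_vec n. qf n A v \<le> (c1 * c2) * qf n C v"
  proof
    fix v :: "complex vec" assume v: "v \<in> carrier_vec n"
    have "qf n A v \<le> c1 * qf n B v" using c1 v by auto
    also have "\<dots> \<le> c1 * (c2 * qf n C v)" using c2 v c1(1) by (auto intro: mult_left_mono)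
    finally show "qf n A v \<le> (c1 * c2) * qf n C v" by simp
  qed
  thus ?thesis using domi_iff[OF A C] c1 c2 by (metis mult_nonneg_nonneg)
qed

lemma domi_refl: "positive_op n A \<Longrightarrow> domi n A A"
  using domi_iff[of n A A] by (metis order_refl mult_1 zero_le_one)

lemma supp_mono:
  assumes X: "positive_op n X" and Y: "positive_op n Y" and d: "domi n X Y"
  shows "SuppV n X \<subseteq> SuppV n Y"
  unfolding SuppV_def using domi_trans[OF psd_outv X Y _ d] by auto

lemma bf_unitR: "i < n \<Longrightarrow> bf n A y (unit_vec n i) = (\<Sum>k<n. cnj (y $ k) * A $$ (k,i))"
  unfolding bf_def
proof (rule sum.cong[OF refl])
  fix k assume i: "i < n" and k: "k \<in> {..<n}"
  have "(\<Sum>l<n. cnj (y $ k) * A $$ (k, l) * unit_vec n i $ l) = (\<Sum>l<n. if l = i then cnj (y $ k) * A $$ (k, l) else 0)"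
    using k by (intro sum.cong) (auto simp: unit_vec_def)
  also have "\<dots> = cnj (y $ k) * A $$ (k, i)" using i by simp
  finally show "(\<Sum>l<n. cnj (y $ k) * A $$ (k, l) * unit_vec n i $ l) = cnj (y $ k) * A $$ (k, i)" .
qed

lemma elim_step:
  assumes A: "positive_op n A" and i: "i < n" and nz: "A $$ (i,i) \<noteq> 0"
  defines "a \<equiv> Re (A $$ (i,i))"
  defines "v \<equiv> vec n (\<lambda>k. A $$ (k,i) / complex_of_real (sqrt a))"
  shows "v \<in> carrier_vec n" "v $ i \<noteq> 0" "positive_op n (A - outv n v)"
    "\<And>y. y \<in> carrier_vec n \<Longrightarrow> qf n (outv n v) y \<le> qf n A y"
    "\<And>j. j < n \<Longrightarrow> (A - outv n v) $$ (j,j) = A $$ (j,j) - complex_of_real ((cmod (A $$ (j,i)))^2 / a)"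
proof -
  have cA: "A \<in> carrier_mat n n" using A psd_carrier by auto
  have Aii: "A $$ (i,i) = of_real a" using psd_bf_real[OF A, of "unit_vec n i"] i
    by (simp add: bf_unit a_def qf_def)
  have a: "a > 0"
  proof -
    have "a \<ge> 0" using psd_qf_nonneg[OF A, of "unit_vec n i"] i by (simp add: qf_def bf_unit a_def)
    moreover have "a \<noteq> 0" using nz Aii by auto
    ultimately show ?thesis by simp
  qed
  show vc: "v \<in> carrier_vec n" by (simp add: v_def)
  show "v $ i \<noteq> 0" using i nz a by (simp add: v_def)
  have sv: "sv n y v = bf n A y (unit_vec n i) / complex_of_real (sqrt a)" if y: "y \<in> carrier_vec n" for y
    unfolding sv_def bf_unitR[OF i] v_def by (simp add: sum_divide_distrib)
  show le: "qf n (outv n v) y \<le> qf n A y" if y: "y \<in> carrier_vec n" for y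
  proof -
    have "qf n (outv n v) y = (cmod (bf n A y (unit_vec n i)))^2 / a"
      unfolding qf_outv sv[OF y] using a by (simp add: norm_divide power_divide)
    also have "\<dots> \<le> (qf n A y * a) / a"
      using psd_cs[OF A y, of "unit_vec n i"] i a by (intro divide_right_mono) (auto simp: bf_unit qf_def a_def)
    also have "\<dots> = qf n A y" using a by simp
    finally show ?thesis .
  qed
  show "positive_op n (A - outv n v)"
  proof (rule psd_by_qf)
    show "A - outv n v \<in> carrier_mat n n" using cA by simp
    fix y :: "complex vec" assume y: "y \<in> carrier_vec n"
    show "bf n (A - outv n v) y y = complex_of_real (qf n (A - outv n v) y)"
      using bf_minus_mat[OF cA outv_carrier] psd_bf_real[OF A y] psd_bf_real[OF psd_outv y] cA
      by (simp add: qf_def)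
    show "qf n (A - outv n v) y \<ge> 0" using le[OF y] qf_minus[OF cA outv_carrier] by simp
  qed
  show "(A - outv n v) $$ (j,j) = A $$ (j,j) - complex_of_real ((cmod (A $$ (j,i)))^2 / a)" if j: "j < n" for j
  proof -
    have "(A - outv n v) $$ (j,j) = A $$ (j,j) - v $ j * cnj (v $ j)" using j cA by (simp add: outv_def)
    also have "v $ j * cnj (v $ j) = (A $$ (j,i) * cnj (A $$ (j,i))) / of_real a"
    proof -
      have sa: "sqrt a * sqrt a = a" using a by simp
      have ss: "complex_of_real (sqrt a) * complex_of_real (sqrt a) = complex_of_real a"
        unfolding of_real_mult[symmetric] sa ..
      have "v $ j * cnj (v $ j) = (A $$ (j,i) / complex_of_real (sqrt a)) * (cnj (A $$ (j,i)) / complex_of_real (sqrt a))"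
        using j by (simp add: v_def)
      also have "\<dots> = (A $$ (j,i) * cnj (A $$ (j,i))) / (complex_of_real (sqrt a) * complex_of_real (sqrt a))"
        by (rule times_divide_times_eq)
      finally show ?thesis unfolding ss .
    qed
    also have "\<dots> = complex_of_real ((cmod (A $$ (j,i)))^2 / a)"
      by (simp add: complex_norm_square[symmetric])
    finally show ?thesis .
  qed
qed


lemma domi_by_qf:
  assumes A: "positive_op n A" and B: "positive_op n B" and c: "c \<ge> 0"
    and le: "\<And>v. v \<in> carrier_vec n \<Longrightarrow> qf n A v \<le> c * qf n B v"
  shows "domi n A B"
  using domi_iff[OF A B] c le by auto

lemma domi_qfE:
  assumes A: "positive_op n A" and B: "positive_op n B" and d: "domi n A B"
  obtains c where "c \<ge> 0" "\<And>v. v \<in> carrier_vec n \<Longrightarrow> qf n A v \<le> c * qf n B v"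
  using domi_iff[OF A B] d by auto

lemma elim_supp:
  assumes A: "positive_op n A" and i: "i < n" and nz: "A $$ (i,i) \<noteq> 0"
  shows "vec n (\<lambda>k. A $$ (k,i) / complex_of_real (sqrt (Re (A $$ (i,i))))) \<in> SuppV n A"
  unfolding SuppV_def using elim_step[OF A i nz]
  by (auto intro!: domi_by_qf[OF psd_outv A, of 1])

lemma supp_dom:
  assumes A0: "positive_op n A0" and B: "positive_op n B" and S0: "SuppV n A0 \<subseteq> SuppV n B"
  shows "domi n A0 B"
proof -
  have "\<forall>A. positive_op n A \<longrightarrow> card {j. j < n \<and> A $$ (j,j) \<noteq> 0} = N \<longrightarrow> SuppV n A \<subseteq> SuppV n B \<longrightarrow> domi n A B" for N
  proof (induction N rule: less_induct)
    case (less N)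
    show ?case
    proof (intro allI impI)
      fix A assume A: "positive_op n A" and N: "card {j. j < n \<and> A $$ (j,j) \<noteq> 0} = N"
        and S: "SuppV n A \<subseteq> SuppV n B"
      have cA: "A \<in> carrier_mat n n" using A psd_carrier by auto
      show "domi n A B"
      proof (cases "\<exists>i<n. A $$ (i,i) \<noteq> 0")
        case False
        then have A0: "A = 0\<^sub>m n n" by (intro psd_diag_zero[OF A]) auto
        show ?thesis
          by (rule domi_by_qf[OF A B order_refl]) (simp add: A0 qf_zero)
      next
        case True
        then obtain i where i: "i < n" "A $$ (i,i) \<noteq> 0" by auto
        define a where "a = Re (A $$ (i,i))"
        define v where "v = vec n (\<lambda>k. A $$ (k,i) / complex_of_real (sqrt a))"
        note es = elim_step[OF A i(1) i(2), folded a_def, folded v_def]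
        have vS: "v \<in> SuppV n A" using elim_supp[OF A i] unfolding v_def a_def .
        define A' where "A' = A - outv n v"
        have A': "positive_op n A'" using es(3) A'_def by simp
        have qA': "qf n A' y = qf n A y - qf n (outv n v) y" for y
          unfolding A'_def using qf_minus[OF cA outv_carrier] .
        have dA'A: "domi n A' A"
          by (rule domi_by_qf[OF A' A, of 1]) (auto simp: qA' qf_outv)
        have SA': "SuppV n A' \<subseteq> SuppV n B" using supp_mono[OF A' A dA'A] S by auto
        have sub: "{j. j < n \<and> A' $$ (j,j) \<noteq> 0} \<subseteq> {j. j < n \<and> A $$ (j,j) \<noteq> 0} - {i}"
        proof
          fix j assume "j \<in> {j. j < n \<and> A' $$ (j,j) \<noteq> 0}"
          hence j: "j < n" and nzj: "A' $$ (j,j) \<noteq> 0" by auto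
          have e: "A' $$ (j,j) = A $$ (j,j) - complex_of_real ((cmod (A $$ (j,i)))^2 / a)"
            using es(5)[OF j] A'_def by simp
          have Aii: "A $$ (i,i) = of_real a" using psd_bf_real[OF A, of "unit_vec n i"] i
            by (simp add: bf_unit a_def qf_def)
          have "j \<noteq> i"
          proof
            assume ji: "j = i"
            have "a \<noteq> 0" using Aii i by auto
            hence "A' $$ (j,j) = 0" using e ji Aii by (simp add: power2_eq_square)
            thus False using nzj by simp
          qed
          moreover have "A $$ (j,j) \<noteq> 0"
          proof
            assume z: "A $$ (j,j) = 0"
            have "(cmod (A $$ (j,i)))^2 \<le> Re (A $$ (j,j)) * Re (A $$ (i,i))"
              using psd_entry_bound[OF A j i(1)] .
            hence "A $$ (j,i) = 0" using z by simp
            hence "A' $$ (j,j) = 0" using e z by simp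
            thus False using nzj by simp
          qed
          ultimately show "j \<in> {j. j < n \<and> A $$ (j,j) \<noteq> 0} - {i}" using j by auto
        qed
        have lt: "card {j. j < n \<and> A' $$ (j,j) \<noteq> 0} < N"
        proof -
          have "{j. j < n \<and> A' $$ (j,j) \<noteq> 0} \<subset> {j. j < n \<and> A $$ (j,j) \<noteq> 0}" using sub i by auto
          moreover have "finite {j. j < n \<and> A $$ (j,j) \<noteq> 0}" by simp
          ultimately show ?thesis using N psubset_card_mono by blast
        qed
        have d1: "domi n A' B" using less.IH[OF lt] A' SA' by blast
        have d2: "domi n (outv n v) B" using vS S unfolding SuppV_def by auto
        obtain c1 where c1: "c1 \<ge> 0" "\<And>y. y \<in> carrier_vec n \<Longrightarrow> qf n A' y \<le> c1 * qf n B y"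
          using domi_qfE[OF A' B d1] by blast
        obtain c2 where c2: "c2 \<ge> 0" "\<And>y. y \<in> carrier_vec n \<Longrightarrow> qf n (outv n v) y \<le> c2 * qf n B y"
          using domi_qfE[OF psd_outv B d2] by blast
        show ?thesis
        proof (rule domi_by_qf[OF A B, of "c1 + c2"])
          show "0 \<le> c1 + c2" using c1 c2 by simp
          fix y :: "complex vec" assume y: "y \<in> carrier_vec n"
          have "qf n A y = qf n A' y + qf n (outv n v) y" using qA' by simp
          also have "\<dots> \<le> c1 * qf n B y + c2 * qf n B y" using c1(2)[OF y] c2(2)[OF y] by simp
          finally show "qf n A y \<le> (c1 + c2) * qf n B y" by (simp add: distrib_right)
        qed
      qed
    qed
  qed
  thus ?thesis using A0 S0 by blast
qed

lemma supp_nonzero: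
  assumes A: "positive_op n A" and nz: "A \<noteq> 0\<^sub>m n n"
  shows "\<exists>v\<in>SuppV n A. v \<noteq> 0\<^sub>v n"
proof -
  obtain i where i: "i < n" "A $$ (i,i) \<noteq> 0" using psd_diag_zero[OF A] nz by blast
  note es = elim_step[OF A i]
  define v where "v = vec n (\<lambda>k. A $$ (k,i) / complex_of_real (sqrt (Re (A $$ (i,i)))))"
  have "v $ i \<noteq> 0" using es(2) v_def by simp
  hence "v \<noteq> 0\<^sub>v n" using i by auto
  moreover have "v \<in> SuppV n A" using elim_supp[OF A i] v_def by simp
  ultimately show ?thesis by blast
qed

lemma sv_zero: "sv n y (0\<^sub>v n) = 0"
  unfolding sv_def by (auto intro!: sum.neutral)

lemma supp_zero: "positive_op n X \<Longrightarrow> 0\<^sub>v n \<in> SuppV n X"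
  unfolding SuppV_def by (auto intro!: domi_by_qf[OF psd_outv, of n X 0] simp: qf_outv sv_zero)

lemma sq_triangle: "(cmod (a + b))^2 \<le> 2 * (cmod a)^2 + 2 * (cmod b)^2"
proof -
  have "cmod (a + b) \<le> cmod a + cmod b" by (rule norm_triangle_ineq)
  hence "(cmod (a + b))^2 \<le> (cmod a + cmod b)^2" by (intro power_mono) auto
  also have "\<dots> \<le> 2 * (cmod a)^2 + 2 * (cmod b)^2"
    using sum_squares_ge_zero[of "cmod a - cmod b" 0] by (simp add: power2_eq_square algebra_simps)
  finally show ?thesis .
qed

lemma supp_add:
  assumes X: "positive_op n X" and v: "v \<in> SuppV n X" and w: "w \<in> SuppV n X"
  shows "v + w \<in> SuppV n X"
proof -
  have vc: "v \<in> carrier_vec n" and wc: "w \<in> carrier_vec n" using v w by (auto simp: SuppV_def)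
  obtain c1 where c1: "c1 \<ge> 0" "\<And>y. y \<in> carrier_vec n \<Longrightarrow> qf n (outv n v) y \<le> c1 * qf n X y"
    using domi_qfE[OF psd_outv X] v by (auto simp: SuppV_def)
  obtain c2 where c2: "c2 \<ge> 0" "\<And>y. y \<in> carrier_vec n \<Longrightarrow> qf n (outv n w) y \<le> c2 * qf n X y"
    using domi_qfE[OF psd_outv X] w by (auto simp: SuppV_def)
  have "domi n (outv n (v + w)) X"
  proof (rule domi_by_qf[OF psd_outv X, of "2*c1 + 2*c2"])
    show "0 \<le> 2*c1 + 2*c2" using c1 c2 by simp
    fix y :: "complex vec" assume y: "y \<in> carrier_vec n"
    have "qf n (outv n (v + w)) y = (cmod (sv n y v + sv n y w))^2"
      by (simp add: qf_outv sv_add[OF vc wc])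
    also have "\<dots> \<le> 2 * qf n (outv n v) y + 2 * qf n (outv n w) y"
      using sq_triangle by (simp add: qf_outv)
    also have "\<dots> \<le> 2 * (c1 * qf n X y) + 2 * (c2 * qf n X y)" using c1(2)[OF y] c2(2)[OF y] by simp
    finally show "qf n (outv n (v + w)) y \<le> (2*c1 + 2*c2) * qf n X y" by (simp add: algebra_simps)
  qed
  thus ?thesis using vc wc by (simp add: SuppV_def)
qed

lemma supp_smult:
  assumes X: "positive_op n X" and v: "v \<in> SuppV n X"
  shows "c \<cdot>\<^sub>v v \<in> SuppV n X"
proof -
  have vc: "v \<in> carrier_vec n" using v by (auto simp: SuppV_def)
  obtain c1 where c1: "c1 \<ge> 0" "\<And>y. y \<in> carrier_vec n \<Longrightarrow> qf n (outv n v) y \<le> c1 * qf n X y"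
    using domi_qfE[OF psd_outv X] v by (auto simp: SuppV_def)
  have "domi n (outv n (c \<cdot>\<^sub>v v)) X"
  proof (rule domi_by_qf[OF psd_outv X, of "(cmod c)^2 * c1"])
    show "0 \<le> (cmod c)^2 * c1" using c1 by simp
    fix y :: "complex vec" assume y: "y \<in> carrier_vec n"
    have "qf n (outv n (c \<cdot>\<^sub>v v)) y = (cmod c)^2 * qf n (outv n v) y"
      by (simp add: qf_outv sv_smult[OF vc] norm_mult power_mult_distrib)
    also have "\<dots> \<le> (cmod c)^2 * (c1 * qf n X y)" using c1(2)[OF y] by (intro mult_left_mono) auto
    finally show "qf n (outv n (c \<cdot>\<^sub>v v)) y \<le> ((cmod c)^2 * c1) * qf n X y" by simp
  qed
  thus ?thesis using vc by (simp add: SuppV_def)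
qed

lemma supp_submodule:
  assumes X: "positive_op n X"
  shows "submodule class_ring (SuppV n X) (module_vec TYPE(complex) n)"
proof -
  interpret vec_space "TYPE(complex)" n .
  show ?thesis
    unfolding submodule_def
    using supp_add[OF X] supp_smult[OF X] supp_zero[OF X]
    by (auto simp: SuppV_def module_axioms[unfolded class_field_def] module_vec_simps class_ring_simps)
qed


lemma chain_bound:
  fixes V :: "nat \<Rightarrow> complex vec set"
  assumes sub: "\<And>j. submodule class_ring (V j) (module_vec TYPE(complex) n)"
    and mono: "\<And>j. j < n \<Longrightarrow> V j \<subseteq> V (Suc j)"
    and strict: "\<And>j. j < n \<Longrightarrow> \<not> V (Suc j) \<subseteq> V j"
    and nz: "\<exists>v\<in>V 0. v \<noteq> 0\<^sub>v n"
  shows False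
proof -
  interpret vec_space "TYPE(complex)" n .
  have subc: "V j \<subseteq> carrier_vec n" for j using sub[of j] unfolding submodule_def by auto
  have "\<exists>S. S \<subseteq> V j \<and> lin_indpt S \<and> finite S \<and> card S = Suc j" if "j \<le> n" for j
    using that
  proof (induction j)
    case 0
    obtain v where v: "v \<in> V 0" "v \<noteq> 0\<^sub>v n" using nz by auto
    have vc: "v \<in> carrier_vec n" using v subc by auto
    have li0: "lin_indpt {}" by (auto simp: lin_dep_def)
    have "v \<notin> span {}" using v(2) by (auto simp: span_def lincomb_def)
    hence "lin_indpt ({} \<union> {v})" using lin_dep_iff_in_span[of "{}" v] li0 vc by auto
    thus ?case using v by (intro exI[of _ "{v}"]) auto
  next
    case (Suc j)
    then obtain S where S: "S \<subseteq> V j" "lin_indpt S" "finite S" "card S = Suc j" by auto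
    obtain w where w: "w \<in> V (Suc j)" "w \<notin> V j" using strict[of j] Suc.prems by auto
    have wc: "w \<in> carrier_vec n" using w subc by auto
    have "span S \<subseteq> V j" by (rule span_is_subset[OF S(1) sub])
    hence ws: "w \<notin> span S" using w by auto
    have wS: "w \<notin> S" using w S by auto
    have Sc: "S \<subseteq> carrier_vec n" using S subc by auto
    have "lin_indpt (S \<union> {w})" using lin_dep_iff_in_span[OF _ S(2) _ wS] Sc wc ws by auto
    moreover have "S \<union> {w} \<subseteq> V (Suc j)" using S(1) mono[of j] Suc.prems w by auto
    moreover have "card (S \<union> {w}) = Suc (Suc j)" using S wS by simp
    ultimately show ?case using S(3) by (intro exI[of _ "S \<union> {w}"]) auto
  qed
  then obtain S where S: "S \<subseteq> V n" "lin_indpt S" "finite S" "card S = Suc n" by auto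
  have "card S \<le> dim" using li_le_dim(2)[OF fin_dim _ S(2)] S(1) subc by auto
  thus False using S(4) dim_is_n by simp
qed


definition cv :: "complex vec \<Rightarrow> complex vec" where
  "cv u = vec (dim_vec u) (\<lambda>i. cnj (u $ i))"

lemma cv_carrier[simp]: "u \<in> carrier_vec n \<Longrightarrow> cv u \<in> carrier_vec n"
  unfolding cv_def by (metis carrier_vecD vec_carrier)

lemma bf_as_sp:
  assumes A: "A \<in> carrier_mat n n" and u: "u \<in> carrier_vec n" and w: "w \<in> carrier_vec n"
  shows "bf n A u w = cv u \<bullet> (A *\<^sub>v w)"
proof -
  have "cv u \<bullet> (A *\<^sub>v w) = (\<Sum>i<n. cnj (u $ i) * (\<Sum>j<n. A $$ (i,j) * w $ j))"
    unfolding scalar_prod_def using A u w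
    by (auto simp: cv_def atLeast0LessThan row_def scalar_prod_def intro!: sum.cong)
  also have "\<dots> = bf n A u w" unfolding bf_def by (simp add: sum_distrib_left mult.assoc)
  finally show ?thesis by simp
qed

lemma adj_carrier[simp]: "M \<in> carrier_mat n n \<Longrightarrow> adj M \<in> carrier_mat n n"
  unfolding adj_def by (metis carrier_matD(1) carrier_matD(2) mat_carrier)

lemma adj_dims[simp]: "dim_row (adj M) = dim_col M" "dim_col (adj M) = dim_row M"
  by (simp_all add: adj_def)

lemma adj_mult_vec_carrier[simp]: "M \<in> carrier_mat n n \<Longrightarrow> v \<in> carrier_vec n \<Longrightarrow> adj M *\<^sub>v v \<in> carrier_vec n"
  using mult_mat_vec_carrier[OF adj_carrier] by blast

lemma adj_index: "M \<in> carrier_mat n n \<Longrightarrow> i < n \<Longrightarrow> j < n \<Longrightarrow> adj M $$ (i,j) = cnj (M $$ (j,i))"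
proof -
  assume M: "M \<in> carrier_mat n n" and ij: "i < n" "j < n"
  have "dim_row M = n" "dim_col M = n" using M by auto
  thus ?thesis using ij unfolding adj_def by simp
qed

lemma conj_carrier[simp]: "M \<in> carrier_mat n n \<Longrightarrow> A \<in> carrier_mat n n \<Longrightarrow> M * A * adj M \<in> carrier_mat n n"
  by (meson adj_carrier mult_carrier_mat)

lemma cv_adj:
  assumes M: "M \<in> carrier_mat n n" and v: "v \<in> carrier_vec n"
  shows "transpose_mat M *\<^sub>v cv v = cv (adj M *\<^sub>v v)"
proof (rule eq_vecI)
  show "dim_vec (transpose_mat M *\<^sub>v cv v) = dim_vec (cv (adj M *\<^sub>v v))" using M v by (simp add: cv_def)
  fix k assume "k < dim_vec (cv (adj M *\<^sub>v v))"
  hence k: "k < n" using M by (simp add: cv_def)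
  have "(transpose_mat M *\<^sub>v cv v) $ k = (\<Sum>i<n. M $$ (i,k) * cnj (v $ i))"
    using M v k by (auto simp: scalar_prod_def cv_def atLeast0LessThan intro!: sum.cong)
  also have "\<dots> = cnj (\<Sum>i<n. cnj (M $$ (i,k)) * v $ i)" by simp
  also have "(\<Sum>i<n. cnj (M $$ (i,k)) * v $ i) = (adj M *\<^sub>v v) $ k"
    using M v k by (auto simp: scalar_prod_def adj_index atLeast0LessThan intro!: sum.cong)
  finally show "(transpose_mat M *\<^sub>v cv v) $ k = cv (adj M *\<^sub>v v) $ k" using M k by (simp add: cv_def)
qed

lemma bf_conj:
  assumes M: "M \<in> carrier_mat n n" and A: "A \<in> carrier_mat n n" and v: "v \<in> carrier_vec n"
  shows "bf n (M * A * adj M) v v = bf n A (adj M *\<^sub>v v) (adj M *\<^sub>v v)"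
proof -
  define w where "w = adj M *\<^sub>v v"
  have wc: "w \<in> carrier_vec n" using M v by (simp add: w_def)
  have "(M * A * adj M) *\<^sub>v v = M *\<^sub>v (A *\<^sub>v w)"
    using M A v by (simp add: w_def assoc_mult_mat_vec[of _ n n _ n])
  hence "bf n (M * A * adj M) v v = cv v \<bullet> (M *\<^sub>v (A *\<^sub>v w))"
    using bf_as_sp[of "M * A * adj M" n v v] M A v by simp
  also have "\<dots> = (transpose_mat M *\<^sub>v cv v) \<bullet> (A *\<^sub>v w)"
    using transpose_vec_mult_scalar[OF M, of "A *\<^sub>v w" "cv v"] A wc v by simp
  also have "\<dots> = cv w \<bullet> (A *\<^sub>v w)" using cv_adj[OF M v] w_def by simp
  also have "\<dots> = bf n A w w" using bf_as_sp[OF A wc wc] by simp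
  finally show ?thesis by (simp add: w_def)
qed

lemma psd_conj:
  assumes M: "M \<in> carrier_mat n n" and A: "positive_op n A"
  shows "positive_op n (M * A * adj M)"
proof (rule psd_intro)
  have cA: "A \<in> carrier_mat n n" using A psd_carrier by auto
  show "M * A * adj M \<in> carrier_mat n n" using M cA by simp
  fix v :: "complex vec" assume v: "v \<in> carrier_vec n"
  show "nn (bf n (M * A * adj M) v v)" unfolding bf_conj[OF M cA v]
    using psd_nn[OF A] M v by simp
qed

lemma ampliate_1:
  assumes X: "X \<in> carrier_mat d d" and EX: "E X \<in> carrier_mat d d"
  shows "ampliate 1 d E X = E X"
proof -
  have inner: "mat d d (\<lambda>(k,l). X $$ (k, l)) = X" using X by (intro eq_matI) auto
  have inner2: "mat d d (($$) X) = X" using X by (intro eq_matI) auto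
  show ?thesis
  proof (rule eq_matI)
    fix i j assume "i < dim_row (E X)" "j < dim_col (E X)"
    hence ij: "i < d" "j < d" using EX by auto
    show "ampliate 1 d E X $$ (i, j) = E X $$ (i, j)"
      using ij by (simp add: ampliate_def inner inner2)
  qed (use EX in \<open>auto simp: ampliate_def\<close>)
qed

lemma minus_as_add: "A \<in> carrier_mat n n \<Longrightarrow> B \<in> carrier_mat n n \<Longrightarrow> A - B = (A::complex mat) + (-1) \<cdot>\<^sub>m B"
  by (intro eq_matI) auto

locale qprog =
  fixes d m :: nat and E :: "nat \<Rightarrow> complex mat \<Rightarrow> complex mat" and M1 :: "complex mat"
  assumes so: "\<And>k. k \<in> {1..m} \<Longrightarrow> super_operator d (E k)"
  and M1: "M1 \<in> carrier_mat d d"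
begin

definition lw :: "nat list \<Rightarrow> bool" where "lw f \<longleftrightarrow> set f \<subseteq> {1..m}"

lemma E_lin: "k \<in> {1..m} \<Longrightarrow> linear_op_map d (E k)"
  using so by (simp add: super_operator_def)

lemma E_carrier: "k \<in> {1..m} \<Longrightarrow> X \<in> carrier_mat d d \<Longrightarrow> E k X \<in> carrier_mat d d"
  using E_lin by (simp add: linear_op_map_def)

lemma E_psd: "k \<in> {1..m} \<Longrightarrow> positive_op d X \<Longrightarrow> positive_op d (E k X)"
proof -
  assume k: "k \<in> {1..m}" and X: "positive_op d X"
  have cp: "completely_positive d (E k)" using so[OF k] by (simp add: super_operator_def)
  have "positive_op (1*d) (ampliate 1 d (E k) X)" using cp X unfolding completely_positive_def by (metis mult_1)
  hence a: "positive_op d (ampliate 1 d (E k) X)" unfolding mult_1 .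
  have eq: "ampliate 1 d (E k) X = E k X"
    using ampliate_1[of X d "E k"] E_carrier[OF k] psd_carrier[OF X] by blast
  show ?thesis using a unfolding eq .
qed

lemma F_carrier: "k \<in> {1..m} \<Longrightarrow> X \<in> carrier_mat d d \<Longrightarrow> Fk E M1 k X \<in> carrier_mat d d"
  unfolding Fk_def using E_carrier M1 conj_carrier by blast

lemma F_add: "k \<in> {1..m} \<Longrightarrow> A \<in> carrier_mat d d \<Longrightarrow> B \<in> carrier_mat d d \<Longrightarrow>
   Fk E M1 k (A + B) = Fk E M1 k A + Fk E M1 k B"
proof -
  assume k: "k \<in> {1..m}" and A: "A \<in> carrier_mat d d" and B: "B \<in> carrier_mat d d"
  have "M1 * (A + B) * adj M1 = M1 * A * adj M1 + M1 * B * adj M1"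
  proof -
    have "M1 * (A + B) = M1 * A + M1 * B" using M1 A B by (simp add: mult_add_distrib_mat)
    also have "(M1 * A + M1 * B) * adj M1 = M1 * A * adj M1 + M1 * B * adj M1"
      using M1 A B by (intro add_mult_distrib_mat[of _ d d]) auto
    finally show ?thesis .
  qed
  thus ?thesis using E_lin[OF k] M1 A B unfolding Fk_def linear_op_map_def by simp
qed

lemma F_smult: "k \<in> {1..m} \<Longrightarrow> A \<in> carrier_mat d d \<Longrightarrow> Fk E M1 k (c \<cdot>\<^sub>m A) = c \<cdot>\<^sub>m Fk E M1 k A"
proof -
  assume k: "k \<in> {1..m}" and A: "A \<in> carrier_mat d d"
  have "M1 * (c \<cdot>\<^sub>m A) * adj M1 = c \<cdot>\<^sub>m (M1 * A * adj M1)"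
  proof -
    have "M1 * (c \<cdot>\<^sub>m A) = c \<cdot>\<^sub>m (M1 * A)" using M1 A by (simp add: mult_smult_distrib)
    also have "(c \<cdot>\<^sub>m (M1 * A)) * adj M1 = c \<cdot>\<^sub>m (M1 * A * adj M1)"
      using M1 A by (intro mult_smult_assoc_mat[of _ d d]) auto
    finally show ?thesis .
  qed
  thus ?thesis using E_lin[OF k] M1 A unfolding Fk_def linear_op_map_def by simp
qed

lemma F_minus: "k \<in> {1..m} \<Longrightarrow> A \<in> carrier_mat d d \<Longrightarrow> B \<in> carrier_mat d d \<Longrightarrow>
   Fk E M1 k (A - B) = Fk E M1 k A - Fk E M1 k B"
proof -
  assume k: "k \<in> {1..m}" and A: "A \<in> carrier_mat d d" and B: "B \<in> carrier_mat d d"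
  have "Fk E M1 k (A - B) = Fk E M1 k (A + (-1) \<cdot>\<^sub>m B)" using minus_as_add[OF A B] by simp
  also have "\<dots> = Fk E M1 k A + (-1) \<cdot>\<^sub>m Fk E M1 k B"
    using F_add[OF k A, of "(-1) \<cdot>\<^sub>m B"] F_smult[OF k B] B by simp
  also have "\<dots> = Fk E M1 k A - Fk E M1 k B"
    using minus_as_add[OF F_carrier[OF k A] F_carrier[OF k B]] by simp
  finally show ?thesis .
qed

lemma F_psd: "k \<in> {1..m} \<Longrightarrow> positive_op d X \<Longrightarrow> positive_op d (Fk E M1 k X)"
  unfolding Fk_def using E_psd psd_conj[OF M1] by simp

lemma F_zero: "k \<in> {1..m} \<Longrightarrow> Fk E M1 k (0\<^sub>m d d) = 0\<^sub>m d d"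
proof -
  assume k: "k \<in> {1..m}"
  have "0\<^sub>m d d = (0::complex) \<cdot>\<^sub>m (0\<^sub>m d d)" by (intro eq_matI) auto
  hence "Fk E M1 k (0\<^sub>m d d) = 0 \<cdot>\<^sub>m Fk E M1 k (0\<^sub>m d d)" using F_smult[OF k, of "0\<^sub>m d d" 0] by simp
  also have "\<dots> = 0\<^sub>m d d" using F_carrier[OF k, of "0\<^sub>m d d"] by (intro eq_matI) auto
  finally show ?thesis .
qed

lemma FW_Nil[simp]: "Fstr E M1 [] X = X" by (simp add: Fstr_def)
lemma FW_Cons: "Fstr E M1 (k # f) X = Fstr E M1 f (Fk E M1 k X)" by (simp add: Fstr_def)
lemma FW_append: "Fstr E M1 (f @ g) X = Fstr E M1 g (Fstr E M1 f X)" by (simp add: Fstr_def)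
lemma FW_snoc: "Fstr E M1 (f @ [k]) X = Fk E M1 k (Fstr E M1 f X)" by (simp add: Fstr_def)

lemma FW_carrier: "lw f \<Longrightarrow> X \<in> carrier_mat d d \<Longrightarrow> Fstr E M1 f X \<in> carrier_mat d d"
  by (induction f arbitrary: X) (auto simp: lw_def FW_Cons F_carrier)

lemma FW_add: "lw f \<Longrightarrow> A \<in> carrier_mat d d \<Longrightarrow> B \<in> carrier_mat d d \<Longrightarrow>
   Fstr E M1 f (A + B) = Fstr E M1 f A + Fstr E M1 f B"
  by (induction f arbitrary: A B) (auto simp: lw_def FW_Cons F_carrier F_add)

lemma FW_minus: "lw f \<Longrightarrow> A \<in> carrier_mat d d \<Longrightarrow> B \<in> carrier_mat d d \<Longrightarrow>
   Fstr E M1 f (A - B) = Fstr E M1 f A - Fstr E M1 f B"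
  by (induction f arbitrary: A B) (auto simp: lw_def FW_Cons F_carrier F_minus)

lemma FW_smult: "lw f \<Longrightarrow> A \<in> carrier_mat d d \<Longrightarrow> Fstr E M1 f (c \<cdot>\<^sub>m A) = c \<cdot>\<^sub>m Fstr E M1 f A"
  by (induction f arbitrary: A) (auto simp: lw_def FW_Cons F_carrier F_smult)

lemma FW_psd: "lw f \<Longrightarrow> positive_op d X \<Longrightarrow> positive_op d (Fstr E M1 f X)"
  by (induction f arbitrary: X) (auto simp: lw_def FW_Cons F_psd)

lemma FW_zero: "lw f \<Longrightarrow> Fstr E M1 f (0\<^sub>m d d) = 0\<^sub>m d d"
  by (induction f) (auto simp: lw_def FW_Cons F_zero)

end


lemma psd_cB_A:
  assumes A: "positive_op n A" and B: "positive_op n B"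
  shows "positive_op n (complex_of_real c \<cdot>\<^sub>m B - A) \<longleftrightarrow> (\<forall>v\<in>carrier_vec n. qf n A v \<le> c * qf n B v)"
proof -
  have cA: "A \<in> carrier_mat n n" and cB: "B \<in> carrier_mat n n" using A B psd_carrier by auto
  have e: "bf n (complex_of_real c \<cdot>\<^sub>m B - A) v v = of_real (c * qf n B v - qf n A v)" if v: "v \<in> carrier_vec n" for v
    using bf_minus_mat[of "complex_of_real c \<cdot>\<^sub>m B" n A] cA cB bf_smult_mat[OF cB]
      psd_bf_real[OF A v] psd_bf_real[OF B v] by simp
  have "positive_op n (complex_of_real c \<cdot>\<^sub>m B - A) \<longleftrightarrow> (\<forall>v\<in>carrier_vec n. qf n (complex_of_real c \<cdot>\<^sub>m B - A) v \<ge> 0)"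
    by (rule psd_iff_qf) (use cA cB e in auto)
  also have "\<dots> \<longleftrightarrow> (\<forall>v\<in>carrier_vec n. qf n A v \<le> c * qf n B v)"
    using e by (auto simp: qf_def)
  finally show ?thesis .
qed

lemma domi_zero:
  assumes A: "positive_op n A" and d: "domi n A (0\<^sub>m n n)"
  shows "A = 0\<^sub>m n n"
proof (rule psd_quad_zero[OF A])
  fix v :: "complex vec" assume v: "v \<in> carrier_vec n"
  obtain c where "c \<ge> 0" "\<And>v. v \<in> carrier_vec n \<Longrightarrow> qf n A v \<le> c * qf n (0\<^sub>m n n) v"
    using domi_qfE[OF A psd_zero d] by blast
  hence "qf n A v \<le> 0" using v by (simp add: qf_zero)
  hence "qf n A v = 0" using psd_qf_nonneg[OF A v] by simp
  thus "bf n A v v = 0" using psd_bf_real[OF A v] by simp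
qed

context qprog
begin

fun sk :: "nat \<Rightarrow> complex mat \<Rightarrow> complex mat" where
  "sk 0 X = 0\<^sub>m d d"
| "sk (Suc k) X = Fk E M1 (Suc k) X + sk k X"

fun Sq :: "complex mat \<Rightarrow> nat \<Rightarrow> complex mat" where
  "Sq Y 0 = Y"
| "Sq Y (Suc j) = Y + sk m (Sq Y j)"

lemma sk_carrier: "j \<le> m \<Longrightarrow> X \<in> carrier_mat d d \<Longrightarrow> sk j X \<in> carrier_mat d d"
  by (induction j) (auto intro!: F_carrier)

lemma sk_psd: "j \<le> m \<Longrightarrow> positive_op d X \<Longrightarrow> positive_op d (sk j X)"
  by (induction j) (auto intro!: psd_add F_psd psd_zero)

lemma qf_sk: "j \<le> m \<Longrightarrow> X \<in> carrier_mat d d \<Longrightarrow> qf d (sk j X) y = (\<Sum>k\<in>{1..j}. qf d (Fk E M1 k X) y)"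
proof (induction j)
  case 0 then show ?case by (simp add: qf_zero)
next
  case (Suc j)
  have "qf d (sk (Suc j) X) y = qf d (Fk E M1 (Suc j) X) y + qf d (sk j X) y"
    using Suc.prems by (simp add: qf_add F_carrier sk_carrier)
  also have "\<dots> = (\<Sum>k\<in>{1..Suc j}. qf d (Fk E M1 k X) y)"
    using Suc by (simp add: atLeastAtMostSuc_conv add.commute)
  finally show ?case .
qed

lemma Sq_psd: "positive_op d Y \<Longrightarrow> positive_op d (Sq Y j)"
  by (induction j) (auto intro!: psd_add sk_psd)

lemma Sq_carrier: "positive_op d Y \<Longrightarrow> Sq Y j \<in> carrier_mat d d"
  using Sq_psd psd_carrier by blast

lemma qf_Sq_Suc: "positive_op d Y \<Longrightarrow> qf d (Sq Y (Suc j)) y = qf d Y y + qf d (sk m (Sq Y j)) y"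
  using psd_carrier sk_carrier Sq_carrier by (simp add: qf_add)

lemma F_qf_scale:
  assumes k: "k \<in> {1..m}" and A: "positive_op d A" and B: "positive_op d B" and c: "c \<ge> 0"
    and le: "\<And>y. y \<in> carrier_vec d \<Longrightarrow> qf d A y \<le> c * qf d B y"
    and y: "y \<in> carrier_vec d"
  shows "qf d (Fk E M1 k A) y \<le> c * qf d (Fk E M1 k B) y"
proof -
  have cA: "A \<in> carrier_mat d d" and cB: "B \<in> carrier_mat d d" using A B psd_carrier by auto
  have "positive_op d (complex_of_real c \<cdot>\<^sub>m B - A)" using psd_cB_A[OF A B] le by auto
  hence "positive_op d (Fk E M1 k (complex_of_real c \<cdot>\<^sub>m B - A))" by (rule F_psd[OF k])
  also have "Fk E M1 k (complex_of_real c \<cdot>\<^sub>m B - A) = complex_of_real c \<cdot>\<^sub>m Fk E M1 k B - Fk E M1 k A"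
    using F_minus[OF k _ cA] F_smult[OF k cB] cB by simp
  finally show ?thesis using psd_cB_A[OF F_psd[OF k A] F_psd[OF k B]] y by auto
qed

lemma sk_qf_scale:
  assumes j: "j \<le> m" and A: "positive_op d A" and B: "positive_op d B" and c: "c \<ge> 0"
    and le: "\<And>y. y \<in> carrier_vec d \<Longrightarrow> qf d A y \<le> c * qf d B y"
    and y: "y \<in> carrier_vec d"
  shows "qf d (sk j A) y \<le> c * qf d (sk j B) y"
proof -
  have cA: "A \<in> carrier_mat d d" and cB: "B \<in> carrier_mat d d" using A B psd_carrier by auto
  have "qf d (sk j A) y = (\<Sum>k\<in>{1..j}. qf d (Fk E M1 k A) y)" using qf_sk[OF j cA] .
  also have "\<dots> \<le> (\<Sum>k\<in>{1..j}. c * qf d (Fk E M1 k B) y)"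
    using j by (intro sum_mono F_qf_scale[OF _ A B c le y]) auto
  also have "\<dots> = c * qf d (sk j B) y" using qf_sk[OF j cB] by (simp add: sum_distrib_left)
  finally show ?thesis .
qed

lemma Sq_step:
  assumes Y: "positive_op d Y" and c: "c \<ge> 0"
    and le: "\<And>y. y \<in> carrier_vec d \<Longrightarrow> qf d (Sq Y i) y \<le> c * qf d (Sq Y j) y"
  shows "domi d (Sq Y (Suc i)) (Sq Y (Suc j))"
proof (rule domi_by_qf[OF Sq_psd[OF Y] Sq_psd[OF Y], of "max 1 c"])
  show "0 \<le> max 1 c" by simp
  fix y :: "complex vec" assume y: "y \<in> carrier_vec d"
  have s: "qf d (sk m (Sq Y i)) y \<le> c * qf d (sk m (Sq Y j)) y"
    by (rule sk_qf_scale[OF order_refl Sq_psd[OF Y] Sq_psd[OF Y] c le y])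
  have n1: "qf d Y y \<ge> 0" using psd_qf_nonneg[OF Y y] .
  have n2: "qf d (sk m (Sq Y j)) y \<ge> 0" using psd_qf_nonneg[OF sk_psd[OF order_refl Sq_psd[OF Y]] y] .
  have "qf d (Sq Y (Suc i)) y = qf d Y y + qf d (sk m (Sq Y i)) y" by (rule qf_Sq_Suc[OF Y])
  also have "\<dots> \<le> qf d Y y + c * qf d (sk m (Sq Y j)) y" using s by simp
  also have "\<dots> \<le> max 1 c * qf d Y y + max 1 c * qf d (sk m (Sq Y j)) y"
    using n1 n2 mult_right_mono[of 1 "max 1 c" "qf d Y y"] mult_right_mono[of c "max 1 c" "qf d (sk m (Sq Y j)) y"]
    by (intro add_mono) auto
  also have "\<dots> = max 1 c * qf d (Sq Y (Suc j)) y" unfolding qf_Sq_Suc[OF Y] by (simp add: distrib_left)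
  finally show "qf d (Sq Y (Suc i)) y \<le> max 1 c * qf d (Sq Y (Suc j)) y" .
qed

lemma Sq_mono1: "positive_op d Y \<Longrightarrow> domi d (Sq Y j) (Sq Y (Suc j))"
proof (induction j)
  case 0
  show ?case
  proof (rule domi_by_qf[OF Sq_psd[OF 0] Sq_psd[OF 0], of 1])
    fix y :: "complex vec" assume y: "y \<in> carrier_vec d"
    show "qf d (Sq Y 0) y \<le> 1 * qf d (Sq Y (Suc 0)) y"
      using qf_Sq_Suc[OF 0, of 0 y] psd_qf_nonneg[OF sk_psd[OF order_refl 0] y] by simp
  qed simp
next
  case (Suc j)
  obtain c where c: "c \<ge> 0" "\<And>y. y \<in> carrier_vec d \<Longrightarrow> qf d (Sq Y j) y \<le> c * qf d (Sq Y (Suc j)) y"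
    using domi_qfE[OF Sq_psd[OF Suc.prems] Sq_psd[OF Suc.prems] Suc.IH[OF Suc.prems]] by blast
  show ?case by (rule Sq_step[OF Suc.prems c])
qed

lemma Sq_mono: "positive_op d Y \<Longrightarrow> j \<le> i \<Longrightarrow> domi d (Sq Y j) (Sq Y i)"
proof (induction i)
  case 0 then show ?case using domi_refl[OF 0(1)] by simp
next
  case (Suc i)
  show ?case
  proof (cases "j = Suc i")
    case True then show ?thesis using domi_refl[OF Sq_psd[OF Suc.prems(1), of "Suc i"]] by simp
  next
    case False
    hence "j \<le> i" using Suc.prems by simp
    thus ?thesis using Suc.IH[OF Suc.prems(1)] Sq_mono1[OF Suc.prems(1), of i]
      domi_trans[OF Sq_psd Sq_psd Sq_psd] Suc.prems(1) by blast
  qed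
qed

lemma Sq_stable:
  assumes Y: "positive_op d Y" and st: "domi d (Sq Y (Suc j)) (Sq Y j)"
  shows "j \<le> i \<Longrightarrow> domi d (Sq Y i) (Sq Y j)"
proof -
  have step: "domi d (Sq Y (Suc i)) (Sq Y i)" if "j \<le> i" for i
    using that
  proof (induction i)
    case 0 then show ?case using st by simp
  next
    case (Suc i)
    show ?case
    proof (cases "j = Suc i")
      case True then show ?thesis using st by simp
    next
      case False
      hence "j \<le> i" using Suc.prems by simp
      then obtain c where c: "c \<ge> 0" "\<And>y. y \<in> carrier_vec d \<Longrightarrow> qf d (Sq Y (Suc i)) y \<le> c * qf d (Sq Y i) y"
        using domi_qfE[OF Sq_psd[OF Y] Sq_psd[OF Y] Suc.IH] by blast
      show ?thesis by (rule Sq_step[OF Y c])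
    qed
  qed
  show "j \<le> i \<Longrightarrow> domi d (Sq Y i) (Sq Y j)"
  proof (induction i)
    case 0 then show ?case using domi_refl[OF Y] by simp
  next
    case (Suc i)
    show ?case
    proof (cases "j = Suc i")
      case True then show ?thesis using domi_refl[OF Sq_psd[OF Y, of "Suc i"]] by simp
    next
      case False
      hence "j \<le> i" using Suc.prems by simp
      thus ?thesis using Suc.IH step domi_trans[OF Sq_psd[OF Y] Sq_psd[OF Y] Sq_psd[OF Y]] by blast
    qed
  qed
qed

lemma Sq_exists_stable:
  assumes Y: "positive_op d Y" and nz: "Y \<noteq> 0\<^sub>m d d"
  shows "\<exists>j<d. domi d (Sq Y (Suc j)) (Sq Y j)"
proof (rule ccontr)
  assume "\<not> ?thesis"
  hence ns: "\<And>j. j < d \<Longrightarrow> \<not> domi d (Sq Y (Suc j)) (Sq Y j)" by auto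
  show False
  proof (rule chain_bound[of "\<lambda>j. SuppV d (Sq Y j)" d])
    show "\<And>j. submodule class_ring (SuppV d (Sq Y j)) (module_vec TYPE(complex) d)"
      by (rule supp_submodule[OF Sq_psd[OF Y]])
    show "\<And>j. j < d \<Longrightarrow> SuppV d (Sq Y j) \<subseteq> SuppV d (Sq Y (Suc j))"
      by (rule supp_mono[OF Sq_psd[OF Y] Sq_psd[OF Y] Sq_mono1[OF Y]])
    show "\<And>j. j < d \<Longrightarrow> \<not> SuppV d (Sq Y (Suc j)) \<subseteq> SuppV d (Sq Y j)"
      using ns supp_dom[OF Sq_psd[OF Y] Sq_psd[OF Y]] by blast
    show "\<exists>v\<in>SuppV d (Sq Y 0). v \<noteq> 0\<^sub>v d" using supp_nonzero[OF Y nz] by simp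
  qed
qed

lemma Sq_bound:
  assumes Y: "positive_op d Y" and nz: "Y \<noteq> 0\<^sub>m d d"
  shows "domi d (Sq Y i) (Sq Y (d - 1))"
proof -
  obtain j where j: "j < d" "domi d (Sq Y (Suc j)) (Sq Y j)" using Sq_exists_stable[OF Y nz] by blast
  show ?thesis
  proof (cases "j \<le> i")
    case True
    have "domi d (Sq Y i) (Sq Y j)" by (rule Sq_stable[OF Y j(2) True])
    moreover have "domi d (Sq Y j) (Sq Y (d - 1))" using j(1) by (intro Sq_mono[OF Y]) simp
    ultimately show ?thesis using domi_trans[OF Sq_psd[OF Y] Sq_psd[OF Y] Sq_psd[OF Y]] by blast
  next
    case False
    thus ?thesis using j(1) by (intro Sq_mono[OF Y]) simp
  qed
qed

lemma domi_FW:
  assumes f: "lw f" and A: "positive_op d A" and B: "positive_op d B" and dAB: "domi d A B"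
  shows "domi d (Fstr E M1 f A) (Fstr E M1 f B)"
proof -
  have cA: "A \<in> carrier_mat d d" and cB: "B \<in> carrier_mat d d" using A B psd_carrier by auto
  obtain c where c: "c \<ge> 0" "positive_op d (complex_of_real c \<cdot>\<^sub>m B - A)" using dAB domi_def by blast
  have "positive_op d (Fstr E M1 f (complex_of_real c \<cdot>\<^sub>m B - A))" by (rule FW_psd[OF f c(2)])
  also have "Fstr E M1 f (complex_of_real c \<cdot>\<^sub>m B - A) = complex_of_real c \<cdot>\<^sub>m Fstr E M1 f B - Fstr E M1 f A"
    using FW_minus[OF f _ cA] FW_smult[OF f cB] cB by simp
  finally show ?thesis using c(1) domi_def by blast
qed

lemma FW_le_Sq:
  assumes Y: "positive_op d Y"
  shows "lw \<sigma> \<Longrightarrow> domi d (Fstr E M1 \<sigma> Y) (Sq Y (length \<sigma>))"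
proof (induction \<sigma> rule: rev_induct)
  case Nil then show ?case using domi_refl[OF Y] by simp
next
  case (snoc k \<sigma>)
  have l: "lw \<sigma>" and k: "k \<in> {1..m}" using snoc.prems by (auto simp: lw_def)
  have P1: "positive_op d (Fstr E M1 \<sigma> Y)" by (rule FW_psd[OF l Y])
  have d1: "domi d (Fk E M1 k (Fstr E M1 \<sigma> Y)) (Fk E M1 k (Sq Y (length \<sigma>)))"
    using domi_FW[of "[k]", OF _ P1 Sq_psd[OF Y] snoc.IH[OF l]] k by (simp add: lw_def FW_Cons)
  have d2: "domi d (Fk E M1 k (Sq Y (length \<sigma>))) (Sq Y (Suc (length \<sigma>)))"
  proof (rule domi_by_qf[OF F_psd[OF k Sq_psd[OF Y]] Sq_psd[OF Y], of 1])
    fix y :: "complex vec" assume y: "y \<in> carrier_vec d"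
    let ?X = "Sq Y (length \<sigma>)"
    have "qf d (Fk E M1 k ?X) y \<le> (\<Sum>k'\<in>{1..m}. qf d (Fk E M1 k' ?X) y)"
      using k y by (intro member_le_sum psd_qf_nonneg[OF F_psd[OF _ Sq_psd[OF Y]]]) auto
    also have "\<dots> = qf d (sk m ?X) y" using qf_sk[OF order_refl Sq_carrier[OF Y]] by simp
    also have "\<dots> \<le> qf d (Sq Y (Suc (length \<sigma>))) y"
      using qf_Sq_Suc[OF Y] psd_qf_nonneg[OF Y y] by simp
    finally show "qf d (Fk E M1 k ?X) y \<le> 1 * qf d (Sq Y (Suc (length \<sigma>))) y" by simp
  qed simp
  have P2: "positive_op d (Fk E M1 k (Fstr E M1 \<sigma> Y))" by (rule F_psd[OF k P1])
  show ?case using domi_trans[OF P2 F_psd[OF k Sq_psd[OF Y]] Sq_psd[OF Y] d1 d2] by (simp add: FW_snoc)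
qed

lemma sk_kill:
  assumes j: "j \<le> m" and X: "X \<in> carrier_mat d d" and g: "lw g"
    and z: "\<And>k. k \<in> {1..m} \<Longrightarrow> Fstr E M1 (k # g) X = 0\<^sub>m d d"
  shows "Fstr E M1 g (sk j X) = 0\<^sub>m d d"
  using j
proof (induction j)
  case 0 then show ?case using FW_zero[OF g] by simp
next
  case (Suc j)
  have "Fstr E M1 g (sk (Suc j) X) = Fstr E M1 g (Fk E M1 (Suc j) X) + Fstr E M1 g (sk j X)"
    using FW_add[OF g] F_carrier sk_carrier X Suc.prems by simp
  also have "Fstr E M1 g (Fk E M1 (Suc j) X) = 0\<^sub>m d d" using z[of "Suc j"] Suc.prems by (simp add: FW_Cons)
  also have "Fstr E M1 g (sk j X) = 0\<^sub>m d d" using Suc by simp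
  finally show ?case by simp
qed

lemma Sq_kill:
  assumes Y: "positive_op d Y"
  shows "lw g \<Longrightarrow> (\<And>\<tau>. lw \<tau> \<Longrightarrow> length \<tau> \<le> j \<Longrightarrow> Fstr E M1 g (Fstr E M1 \<tau> Y) = 0\<^sub>m d d)
     \<Longrightarrow> Fstr E M1 g (Sq Y j) = 0\<^sub>m d d"
proof (induction j arbitrary: g)
  case 0 then show ?case using "0.prems"(2)[of "[]"] by (simp add: lw_def)
next
  case (Suc j)
  have cY: "Y \<in> carrier_mat d d" using Y psd_carrier by auto
  have a: "Fstr E M1 g Y = 0\<^sub>m d d" using Suc.prems(2)[of "[]"] by (simp add: lw_def)
  have b: "Fstr E M1 (k # g) (Sq Y j) = 0\<^sub>m d d" if k: "k \<in> {1..m}" for k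
  proof (rule Suc.IH)
    show "lw (k # g)" using k Suc.prems(1) by (simp add: lw_def)
    fix \<tau> assume t: "lw \<tau>" "length \<tau> \<le> j"
    have "Fstr E M1 (k # g) (Fstr E M1 \<tau> Y) = Fstr E M1 g (Fstr E M1 (\<tau> @ [k]) Y)"
      by (simp add: FW_Cons FW_snoc)
    also have "\<dots> = 0\<^sub>m d d" using Suc.prems(2)[of "\<tau> @ [k]"] t k by (simp add: lw_def)
    finally show "Fstr E M1 (k # g) (Fstr E M1 \<tau> Y) = 0\<^sub>m d d" .
  qed
  have c: "Fstr E M1 g (sk m (Sq Y j)) = 0\<^sub>m d d"
    by (rule sk_kill[OF order_refl Sq_carrier[OF Y] Suc.prems(1) b])
  have "Fstr E M1 g (Sq Y (Suc j)) = Fstr E M1 g Y + Fstr E M1 g (sk m (Sq Y j))"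
    using FW_add[OF Suc.prems(1) cY] sk_carrier Sq_carrier[OF Y] by simp
  thus ?case using a c by simp
qed

end


definition catw :: "nat list \<Rightarrow> (nat \<Rightarrow> nat) \<Rightarrow> (nat \<Rightarrow> nat)" where
  "catw u s = (\<lambda>i. if i < length u then u ! i else s (i - length u))"

definition shiftw :: "(nat \<Rightarrow> nat) \<Rightarrow> nat \<Rightarrow> (nat \<Rightarrow> nat)" where
  "shiftw s c = (\<lambda>i. s (i + c))"

lemma prefix_length[simp]: "length (prefix s n) = n" by (simp add: prefix_def)
lemma prefix_0[simp]: "prefix s 0 = []" by (simp add: prefix_def)
lemma prefix_nth[simp]: "k < n \<Longrightarrow> prefix s n ! k = s k" by (simp add: prefix_def)

lemma prefix_catw1: "n \<le> length u \<Longrightarrow> prefix (catw u s) n = take n u"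
proof (rule nth_equalityI)
  assume n: "n \<le> length u"
  show "length (prefix (catw u s) n) = length (take n u)" using n by simp
  fix i assume "i < length (prefix (catw u s) n)"
  hence i: "i < n" by simp
  show "prefix (catw u s) n ! i = take n u ! i" using i n by (simp add: catw_def)
qed

lemma prefix_catw2: "\<not> n \<le> length u \<Longrightarrow> prefix (catw u s) n = u @ prefix s (n - length u)"
proof (rule nth_equalityI)
  assume n: "\<not> n \<le> length u"
  show "length (prefix (catw u s) n) = length (u @ prefix s (n - length u))" using n by simp
  fix i assume "i < length (prefix (catw u s) n)"
  hence i: "i < n" by simp
  show "prefix (catw u s) n ! i = (u @ prefix s (n - length u)) ! i"
  proof (cases "i < length u")
    case True thus ?thesis using i by (simp add: catw_def nth_append)
  next
    case False thus ?thesis using i n by (simp add: catw_def nth_append)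
  qed
qed

lemma prefix_catw: "prefix (catw u s) n = (if n \<le> length u then take n u else u @ prefix s (n - length u))"
  using prefix_catw1 prefix_catw2 by simp

lemma prefix_add: "prefix s (n + k) = prefix s n @ map s [n..<n+k]"
proof -
  have "[0..<n+k] = [0..<n] @ [n..<n+k]" by (rule upt_add_eq_append) simp
  thus ?thesis unfolding prefix_def by simp
qed

lemma catw_split: "s = catw (prefix s c) (shiftw s c)"
  by (rule ext) (simp add: catw_def shiftw_def)

lemma paths_prefix: "s \<in> paths m \<Longrightarrow> set (prefix s n) \<subseteq> {1..m}"
  by (auto simp: paths_def prefix_def)

lemma paths_shift: "s \<in> paths m \<Longrightarrow> shiftw s c \<in> paths m"
  by (simp add: paths_def shiftw_def)

lemma fair_shift:
  assumes s: "s \<in> fair_paths m"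
  shows "shiftw s c \<in> fair_paths m"
proof -
  have "infinite {i. shiftw s c i = k}" if k: "k \<in> {1..m}" for k
  proof -
    have inf: "infinite {i. s i = k}" using s k by (simp add: fair_paths_def)
    show ?thesis unfolding infinite_nat_iff_unbounded_le
    proof
      fix N
      obtain i where i: "i \<ge> N + c" "s i = k" using inf unfolding infinite_nat_iff_unbounded_le by blast
      show "\<exists>i\<ge>N. i \<in> {i. shiftw s c i = k}"
        using i by (intro exI[of _ "i - c"]) (auto simp: shiftw_def)
    qed
  qed
  thus ?thesis using s paths_shift by (simp add: fair_paths_def)
qed

lemma finite_short_words: "finite {\<tau>::nat list. set \<tau> \<subseteq> {1..m} \<and> length \<tau> < d}"
proof -
  have "{\<tau>::nat list. set \<tau> \<subseteq> {1..m} \<and> length \<tau> < d} \<subseteq> {\<tau>. set \<tau> \<subseteq> {1..m} \<and> length \<tau> \<le> d}" by auto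
  moreover have "finite {\<tau>::nat list. set \<tau> \<subseteq> {1..m} \<and> length \<tau> \<le> d}"
    by (rule finite_lists_length_le) simp
  ultimately show ?thesis by (rule finite_subset)
qed

definition blk :: "nat list \<Rightarrow> (nat \<Rightarrow> nat list) \<Rightarrow> nat \<Rightarrow> nat list" where
  "blk p \<sigma> r = concat (map (\<lambda>i. [p ! i] @ (if i < r - 1 then \<sigma> i else [])) [0..<r])"

lemma blk_snoc:
  assumes r: "length p = Suc r0"
  shows "blk (p @ [k]) (\<sigma>(r0 := \<tau>)) (Suc (Suc r0)) = blk p \<sigma> (Suc r0) @ \<tau> @ [k]"
proof -
  have m: "map (\<lambda>i. [(p @ [k]) ! i] @ (if i < Suc (Suc r0) - 1 then (\<sigma>(r0 := \<tau>)) i else [])) [0..<r0]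
      = map (\<lambda>i. [p ! i] @ (if i < Suc r0 - 1 then \<sigma> i else [])) [0..<r0]"
    using r by (intro map_cong) (auto simp: nth_append)
  have u1: "[0..<Suc (Suc r0)] = [0..<r0] @ [r0, Suc r0]" by simp
  have u2: "[0..<Suc r0] = [0..<r0] @ [r0]" by simp
  show ?thesis unfolding blk_def u1 u2 map_append concat_append m using r by (simp add: nth_append)
qed

lemma Pi_set_props:
  assumes w: "w \<in> Pi_set m d" and m1: "m \<ge> 1"
  shows "set w \<subseteq> {1..m}" "\<And>k. k \<in> {1..m} \<Longrightarrow> k \<in> set w" "w \<noteq> []"
proof -
  obtain p \<sigma> where p: "p \<in> perms m" and \<sigma>: "\<forall>i < m - 1. set (\<sigma> i) \<subseteq> {1..m} \<and> length (\<sigma> i) < d"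
    and we: "w = concat (map (\<lambda>i. [p ! i] @ (if i < m - 1 then \<sigma> i else [])) [0..<m])"
    using w unfolding Pi_set_def by blast
  have lp: "length p = m" and sp: "set p = {1..m}" using p unfolding perms_def
    by (auto simp: distinct_card[symmetric])
  show "set w \<subseteq> {1..m}"
  proof
    fix x assume "x \<in> set w"
    then obtain i where i: "i < m" "x \<in> set ([p ! i] @ (if i < m - 1 then \<sigma> i else []))"
      unfolding we by auto
    show "x \<in> {1..m}"
    proof (cases "i < m - 1")
      case True
      hence "x \<in> set ([p ! i] @ \<sigma> i)" using i by simp
      moreover have "set (\<sigma> i) \<subseteq> {1..m}" using \<sigma> True by blast
      ultimately show ?thesis using lp sp nth_mem[of i p] i(1) by auto
    next
      case False
      hence "x = p ! i" using i by simp
      thus ?thesis using lp sp nth_mem[of i p] i(1) by auto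
    qed
  qed
  show k: "k \<in> set w" if k: "k \<in> {1..m}" for k
  proof -
    obtain i where i: "i < length p" "p ! i = k" using k sp by (metis in_set_conv_nth)
    thus ?thesis unfolding we using lp by force
  qed
  show "w \<noteq> []" using k[of 1] m1 by auto
qed

context qprog
begin

definition good :: "complex mat \<Rightarrow> (nat \<Rightarrow> nat) \<Rightarrow> bool" where
  "good Y s \<longleftrightarrow> (\<forall>n. Fstr E M1 (prefix s n) Y \<noteq> 0\<^sub>m d d)"

lemma good_catw_D: "good Y (catw u s) \<Longrightarrow> good (Fstr E M1 u Y) s"
  unfolding good_def
proof
  fix n assume g: "\<forall>n. Fstr E M1 (prefix (catw u s) n) Y \<noteq> 0\<^sub>m d d"
  have "prefix (catw u s) (length u + n) = u @ prefix s n" by (simp add: prefix_catw)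
  thus "Fstr E M1 (prefix s n) (Fstr E M1 u Y) \<noteq> 0\<^sub>m d d" using g[rule_format, of "length u + n"]
    by (simp add: FW_append)
qed

lemma good_nz: "good Y s \<Longrightarrow> Y \<noteq> 0\<^sub>m d d"
proof -
  assume "good Y s"
  hence "Fstr E M1 (prefix s 0) Y \<noteq> 0\<^sub>m d d" unfolding good_def by blast
  thus ?thesis by simp
qed

lemma good_catw_I:
  assumes u: "lw u" and g: "good (Fstr E M1 u Y) s"
  shows "good Y (catw u s)"
  unfolding good_def
proof
  fix n
  show "Fstr E M1 (prefix (catw u s) n) Y \<noteq> 0\<^sub>m d d"
  proof (cases "n \<le> length u")
    case True
    have "Fstr E M1 u Y = Fstr E M1 (drop n u) (Fstr E M1 (take n u) Y)"
      by (metis FW_append append_take_drop_id)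
    moreover have "Fstr E M1 u Y \<noteq> 0\<^sub>m d d" using good_nz[OF g] .
    moreover have "lw (drop n u)" using u by (auto simp: lw_def dest: in_set_dropD)
    ultimately have "Fstr E M1 (take n u) Y \<noteq> 0\<^sub>m d d" using FW_zero by metis
    thus ?thesis using True by (simp add: prefix_catw)
  next
    case False
    thus ?thesis using g unfolding good_def by (simp add: prefix_catw FW_append)
  qed
qed

lemma key:
  assumes d1: "d \<ge> 1" and Y: "positive_op d Y" and \<sigma>: "lw \<sigma>" and g: "lw g"
    and nz: "Fstr E M1 g (Fstr E M1 \<sigma> Y) \<noteq> 0\<^sub>m d d"
  shows "\<exists>\<tau>. lw \<tau> \<and> length \<tau> < d \<and> Fstr E M1 g (Fstr E M1 \<tau> Y) \<noteq> 0\<^sub>m d d"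
proof (rule ccontr)
  assume "\<not> ?thesis"
  hence z: "\<And>\<tau>. lw \<tau> \<Longrightarrow> length \<tau> \<le> d - 1 \<Longrightarrow> Fstr E M1 g (Fstr E M1 \<tau> Y) = 0\<^sub>m d d"
    using d1 by fastforce
  have Yn: "Y \<noteq> 0\<^sub>m d d" using nz FW_zero[OF \<sigma>] FW_zero[OF g] by auto
  have S0: "Fstr E M1 g (Sq Y (d - 1)) = 0\<^sub>m d d" by (rule Sq_kill[OF Y g z])
  have dd: "domi d (Fstr E M1 \<sigma> Y) (Sq Y (d - 1))"
    using FW_le_Sq[OF Y \<sigma>] Sq_bound[OF Y Yn] domi_trans[OF FW_psd[OF \<sigma> Y] Sq_psd[OF Y] Sq_psd[OF Y]] by blast
  have "domi d (Fstr E M1 g (Fstr E M1 \<sigma> Y)) (Fstr E M1 g (Sq Y (d - 1)))"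
    by (rule domi_FW[OF g FW_psd[OF \<sigma> Y] Sq_psd[OF Y] dd])
  hence "Fstr E M1 g (Fstr E M1 \<sigma> Y) = 0\<^sub>m d d"
    using domi_zero[OF FW_psd[OF g FW_psd[OF \<sigma> Y]]] S0 by simp
  thus False using nz by simp
qed

lemma gap_shorten:
  assumes d1: "d \<ge> 1" and Y: "positive_op d Y" and \<sigma>: "lw \<sigma>" and k: "k \<in> {1..m}"
    and s: "s \<in> paths m" and g: "good (Fstr E M1 (\<sigma> @ [k]) Y) s"
  shows "\<exists>\<tau>. lw \<tau> \<and> length \<tau> < d \<and> good (Fstr E M1 (\<tau> @ [k]) Y) s"
proof -
  define T where "T = {\<tau>::nat list. set \<tau> \<subseteq> {1..m} \<and> length \<tau> < d}"
  define P where "P n \<tau> \<longleftrightarrow> Fstr E M1 (k # prefix s n) (Fstr E M1 \<tau> Y) \<noteq> 0\<^sub>m d d" for n \<tau>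
  have fT: "finite T" unfolding T_def by (rule finite_short_words)
  have lwg: "lw (k # prefix s n)" for n using k paths_prefix[OF s] by (auto simp: lw_def)
  have ex: "\<exists>\<tau>\<in>T. P n \<tau>" for n
  proof -
    have "Fstr E M1 (k # prefix s n) (Fstr E M1 \<sigma> Y) \<noteq> 0\<^sub>m d d"
      using g unfolding good_def by (simp add: FW_Cons FW_snoc)
    from key[OF d1 Y \<sigma> lwg this] show ?thesis unfolding T_def P_def lw_def by auto
  qed
  have "\<exists>\<tau>\<in>T. infinite {n. P n \<tau>}"
  proof (rule ccontr)
    assume "\<not> ?thesis"
    hence "finite (\<Union>\<tau>\<in>T. {n. P n \<tau>})" using fT by auto
    moreover have "(\<Union>\<tau>\<in>T. {n. P n \<tau>}) = UNIV" using ex by auto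
    ultimately show False by simp
  qed
  then obtain \<tau> where \<tau>: "\<tau> \<in> T" "infinite {n. P n \<tau>}" by blast
  have anti: "P n \<tau>" for n
  proof -
    obtain n' where n': "n' \<ge> n" "P n' \<tau>" using \<tau>(2) unfolding infinite_nat_iff_unbounded_le by blast
    have pe: "prefix s n' = prefix s n @ map s [n..<n']"
      using prefix_add[of s n "n' - n"] n'(1) by simp
    have lw2: "lw (map s [n..<n'])" using s by (auto simp: lw_def paths_def)
    have "Fstr E M1 (k # prefix s n') (Fstr E M1 \<tau> Y) =
      Fstr E M1 (map s [n..<n']) (Fstr E M1 (k # prefix s n) (Fstr E M1 \<tau> Y))"
      unfolding pe by (simp add: FW_append FW_Cons)
    thus ?thesis using n'(2) FW_zero[OF lw2] unfolding P_def by metis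
  qed
  have "good (Fstr E M1 (\<tau> @ [k]) Y) s"
    unfolding good_def using anti unfolding P_def by (simp add: FW_Cons FW_snoc)
  thus ?thesis using \<tau>(1) unfolding T_def lw_def by auto
qed

end


lemma blk_set:
  assumes "x \<in> set (blk p \<sigma> r)"
  shows "\<exists>i<r. x = p ! i \<or> (i < r - 1 \<and> x \<in> set (\<sigma> i))"
  using assms unfolding blk_def by (auto split: if_splits)

lemma pi_fair:
  assumes m1: "m \<ge> 1" and s: "s \<in> Pi_omega m d"
  shows "s \<in> fair_paths m"
proof -
  obtain ws b where ws: "\<forall>i. ws i \<in> Pi_set m d" and b0: "b 0 = 0"
    and bS: "\<forall>i. b (Suc i) = b i + length (ws i)"
    and sb: "\<forall>i j. j < length (ws i) \<longrightarrow> s (b i + j) = ws i ! j"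
    using s unfolding Pi_omega_def by blast
  have ne: "ws i \<noteq> []" for i using Pi_set_props(3)[OF ws[rule_format] m1] .
  have bge: "i \<le> b i" for i
  proof (induction i)
    case 0 then show ?case by simp
  next
    case (Suc i) then show ?case using bS ne[of i] by (simp add: Suc_le_eq) (metis length_greater_0_conv add_le_less_mono add.right_neutral)
  qed
  have cover: "\<exists>i j. j < length (ws i) \<and> n = b i + j" for n
  proof -
    define A where "A = {i. b i \<le> n}"
    have fA: "finite A" using bge unfolding A_def by (metis (mono_tags, lifting) finite_nat_set_iff_bounded_le le_trans mem_Collect_eq)
    have 0: "0 \<in> A" using b0 by (simp add: A_def)
    define i where "i = Max A"
    have iA: "i \<in> A" using fA 0 unfolding i_def by (intro Max_in) auto
    have "Suc i \<notin> A" using fA unfolding i_def using Max_ge[OF fA] by (metis Suc_n_not_le_n)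
    hence "n < b (Suc i)" unfolding A_def by simp
    hence "n - b i < length (ws i)" using bS iA unfolding A_def by auto
    moreover have "n = b i + (n - b i)" using iA unfolding A_def by simp
    ultimately show ?thesis by blast
  qed
  have pth: "s \<in> paths m"
    unfolding paths_def
  proof
    show "\<forall>n. s n \<in> {1..m}"
    proof
      fix n
      obtain i j where ij: "j < length (ws i)" "n = b i + j" using cover by blast
      have "s n = ws i ! j" using sb ij by simp
      moreover have "ws i ! j \<in> set (ws i)" using ij by simp
      moreover have "set (ws i) \<subseteq> {1..m}" using Pi_set_props(1)[OF ws[rule_format] m1] .
      ultimately show "s n \<in> {1..m}" by auto
    qed
  qed
  have "infinite {n. s n = k}" if k: "k \<in> {1..m}" for k
    unfolding infinite_nat_iff_unbounded_le
  proof
    fix N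
    have "k \<in> set (ws N)" using Pi_set_props(2)[OF ws[rule_format] m1 k] .
    then obtain j where j: "j < length (ws N)" "ws N ! j = k" by (metis in_set_conv_nth)
    show "\<exists>n\<ge>N. n \<in> {n. s n = k}"
      using j sb bge[of N] by (intro exI[of _ "b N + j"]) auto
  qed
  thus ?thesis using pth unfolding fair_paths_def by blast
qed

context qprog
begin

lemma blk_lw:
  assumes "length p = r" "set p \<subseteq> {1..m}" "\<forall>i<r-1. set (\<sigma> i) \<subseteq> {1..m} \<and> length (\<sigma> i) < d"
  shows "lw (blk p \<sigma> r)"
  unfolding lw_def
proof
  fix x assume "x \<in> set (blk p \<sigma> r)"
  then obtain i where i: "i < r" "x = p ! i \<or> (i < r - 1 \<and> x \<in> set (\<sigma> i))" using blk_set by blast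
  show "x \<in> {1..m}"
  proof (cases "x = p ! i")
    case True
    have "p ! i \<in> set p" using i(1) assms(1) by simp
    thus ?thesis using assms(2) True by auto
  next
    case False
    hence "i < r - 1" "x \<in> set (\<sigma> i)" using i by auto
    moreover have "set (\<sigma> i) \<subseteq> {1..m}" using assms(3) calculation(1) by blast
    ultimately show ?thesis by auto
  qed
qed

lemma block_partial:
  assumes d1: "d \<ge> 1" and Y: "positive_op d Y" and s: "s \<in> fair_paths m" and g: "good Y s"
  shows "1 \<le> r \<Longrightarrow> r \<le> m \<Longrightarrow> \<exists>p \<sigma> s'. distinct p \<and> length p = r \<and> set p \<subseteq> {1..m} \<and>
     (\<forall>i<r-1. set (\<sigma> i) \<subseteq> {1..m} \<and> length (\<sigma> i) < d) \<and> s' \<in> fair_paths m \<and>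
     good (Fstr E M1 (blk p \<sigma> r) Y) s'"
proof (induction r)
  case 0 then show ?case by simp
next
  case (Suc r)
  show ?case
  proof (cases "r = 0")
    case True
    have sp: "s \<in> paths m" using s by (simp add: fair_paths_def)
    have pf: "prefix s 1 = [s 0]" by (simp add: prefix_def)
    have "good Y (catw (prefix s 1) (shiftw s 1))" using g catw_split[of s 1] by simp
    hence "good (Fstr E M1 [s 0] Y) (shiftw s 1)" using good_catw_D pf by metis
    moreover have "blk [s 0] (\<lambda>_. []) 1 = [s 0]" by (simp add: blk_def)
    moreover have "s 0 \<in> {1..m}" using sp by (simp add: paths_def)
    ultimately show ?thesis using True fair_shift[OF s]
      by (intro exI[of _ "[s 0]"] exI[of _ "\<lambda>_. []"] exI[of _ "shiftw s 1"]) auto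
  next
    case False
    then obtain p \<sigma> s' where p: "distinct p" "length p = r" "set p \<subseteq> {1..m}"
      and \<sigma>: "\<forall>i<r-1. set (\<sigma> i) \<subseteq> {1..m} \<and> length (\<sigma> i) < d"
      and s': "s' \<in> fair_paths m" and g': "good (Fstr E M1 (blk p \<sigma> r) Y) s'"
      using Suc by auto
    have "\<exists>k\<in>{1..m}. k \<notin> set p"
    proof (rule ccontr)
      assume "\<not> ?thesis"
      hence "{1..m} \<subseteq> set p" by auto
      hence "card {1..m} \<le> card (set p)" by (intro card_mono) auto
      thus False using p Suc.prems distinct_card[of p] by simp
    qed
    then obtain k where k: "k \<in> {1..m}" "k \<notin> set p" by blast
    have inf: "infinite {i. s' i = k}" using s' k(1) by (simp add: fair_paths_def)
    obtain i where i: "s' i = k" using not_finite_existsD[OF inf] by auto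
    have s'p: "s' \<in> paths m" using s' by (simp add: fair_paths_def)
    define \<sigma>0 where "\<sigma>0 = prefix s' i"
    define s'' where "s'' = shiftw s' (Suc i)"
    have pS: "prefix s' (Suc i) = \<sigma>0 @ [k]" using i by (simp add: prefix_def \<sigma>0_def)
    have lwb: "lw (blk p \<sigma> r)" by (rule blk_lw[OF p(2,3) \<sigma>])
    define Y' where "Y' = Fstr E M1 (blk p \<sigma> r) Y"
    have Y': "positive_op d Y'" unfolding Y'_def by (rule FW_psd[OF lwb Y])
    have "good Y' (catw (\<sigma>0 @ [k]) s'')" using g' catw_split[of s' "Suc i"] pS
      unfolding Y'_def s''_def by simp
    hence gg: "good (Fstr E M1 (\<sigma>0 @ [k]) Y') s''" by (rule good_catw_D)
    have lw0: "lw \<sigma>0" using paths_prefix[OF s'p] by (simp add: lw_def \<sigma>0_def)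
    have s''f: "s'' \<in> fair_paths m" unfolding s''_def by (rule fair_shift[OF s'])
    hence s''p: "s'' \<in> paths m" by (simp add: fair_paths_def)
    obtain \<tau> where \<tau>: "lw \<tau>" "length \<tau> < d" "good (Fstr E M1 (\<tau> @ [k]) Y') s''"
      using gap_shorten[OF d1 Y' lw0 k(1) s''p gg] by blast
    obtain r0 where r0: "r = Suc r0" using False by (cases r) auto
    have bl: "blk (p @ [k]) (\<sigma>(r0 := \<tau>)) (Suc r) = blk p \<sigma> r @ \<tau> @ [k]"
      using blk_snoc[of p r0 k \<sigma> \<tau>] p(2) r0 by simp
    have gnew: "good (Fstr E M1 (blk (p @ [k]) (\<sigma>(r0 := \<tau>)) (Suc r)) Y) s''"
      using \<tau>(3) unfolding bl Y'_def by (simp add: FW_append)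
    have \<sigma>new: "\<forall>j<Suc r - 1. set ((\<sigma>(r0 := \<tau>)) j) \<subseteq> {1..m} \<and> length ((\<sigma>(r0 := \<tau>)) j) < d"
      using \<sigma> \<tau>(1,2) r0 by (auto simp: lw_def)
    have c1: "distinct (p @ [k])" using p k by simp
    have c2: "length (p @ [k]) = Suc r" using p by simp
    have c3: "set (p @ [k]) \<subseteq> {1..m}" using p k by simp
    show ?thesis using c1 c2 c3 \<sigma>new s''f gnew by blast
  qed
qed

lemma block:
  assumes d1: "d \<ge> 1" and m1: "m \<ge> 1" and Y: "positive_op d Y" and s: "s \<in> fair_paths m" and g: "good Y s"
  shows "\<exists>w s'. w \<in> Pi_set m d \<and> s' \<in> fair_paths m \<and> good (Fstr E M1 w Y) s'"
proof -
  obtain p \<sigma> s' where p: "distinct p" "length p = m" "set p \<subseteq> {1..m}"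
    and \<sigma>: "\<forall>i<m-1. set (\<sigma> i) \<subseteq> {1..m} \<and> length (\<sigma> i) < d"
    and s': "s' \<in> fair_paths m" and g': "good (Fstr E M1 (blk p \<sigma> m) Y) s'"
    using block_partial[OF d1 Y s g m1 order_refl] by blast
  have "set p = {1..m}" using p distinct_card[of p] by (intro card_seteq) auto
  hence "p \<in> perms m" using p by (simp add: perms_def)
  hence "blk p \<sigma> m \<in> Pi_set m d" unfolding Pi_set_def blk_def using \<sigma> by blast
  thus ?thesis using s' g' by blast
qed

definition nxt :: "complex mat \<times> (nat \<Rightarrow> nat) \<Rightarrow> nat list \<times> (nat \<Rightarrow> nat)" where
  "nxt st = (SOME ws. fst ws \<in> Pi_set m d \<and> snd ws \<in> fair_paths m \<and> good (Fstr E M1 (fst ws) (fst st)) (snd ws))"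

fun stt :: "complex mat \<times> (nat \<Rightarrow> nat) \<Rightarrow> nat \<Rightarrow> complex mat \<times> (nat \<Rightarrow> nat)" where
  "stt st0 0 = st0"
| "stt st0 (Suc i) = (Fstr E M1 (fst (nxt (stt st0 i))) (fst (stt st0 i)), snd (nxt (stt st0 i)))"

definition Pst :: "complex mat \<times> (nat \<Rightarrow> nat) \<Rightarrow> bool" where
  "Pst st \<longleftrightarrow> positive_op d (fst st) \<and> snd st \<in> fair_paths m \<and> good (fst st) (snd st)"

lemma nxt_prop:
  assumes d1: "d \<ge> 1" and m1: "m \<ge> 1" and P: "Pst st"
  shows "fst (nxt st) \<in> Pi_set m d \<and> snd (nxt st) \<in> fair_paths m \<and> good (Fstr E M1 (fst (nxt st)) (fst st)) (snd (nxt st))"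
proof -
  have "\<exists>ws. fst ws \<in> Pi_set m d \<and> snd ws \<in> fair_paths m \<and> good (Fstr E M1 (fst ws) (fst st)) (snd ws)"
    using block[OF d1 m1] P unfolding Pst_def by fastforce
  thus ?thesis unfolding nxt_def by (rule someI_ex)
qed

lemma Pst_stt:
  assumes d1: "d \<ge> 1" and m1: "m \<ge> 1" and P: "Pst st0"
  shows "Pst (stt st0 i)"
proof (induction i)
  case 0 then show ?case using P by simp
next
  case (Suc i)
  have n: "fst (nxt (stt st0 i)) \<in> Pi_set m d" "snd (nxt (stt st0 i)) \<in> fair_paths m"
    "good (Fstr E M1 (fst (nxt (stt st0 i))) (fst (stt st0 i))) (snd (nxt (stt st0 i)))"
    using nxt_prop[OF d1 m1 Suc] by auto
  have "lw (fst (nxt (stt st0 i)))" using Pi_set_props(1)[OF n(1) m1] by (simp add: lw_def)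
  hence "positive_op d (Fstr E M1 (fst (nxt (stt st0 i))) (fst (stt st0 i)))"
    using FW_psd Suc unfolding Pst_def by blast
  thus ?case using n unfolding Pst_def by simp
qed

lemma fair_to_pi:
  assumes d1: "d \<ge> 1" and m1: "m \<ge> 1" and \<rho>: "positive_op d \<rho>" and s: "s \<in> fair_paths m" and g: "good \<rho> s"
  shows "\<exists>t\<in>Pi_omega m d. \<forall>n. Fstr E M1 (prefix t n) \<rho> \<noteq> 0\<^sub>m d d"
proof -
  define st0 where "st0 = (\<rho>, s)"
  have P0: "Pst st0" using \<rho> s g by (simp add: Pst_def st0_def)
  define ws where "ws i = fst (nxt (stt st0 i))" for i
  have P: "Pst (stt st0 i)" for i by (rule Pst_stt[OF d1 m1 P0])
  have wsP: "ws i \<in> Pi_set m d" for i using nxt_prop[OF d1 m1 P] ws_def by simp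
  have wslw: "lw (ws i)" for i using Pi_set_props(1)[OF wsP m1] by (simp add: lw_def)
  have wsne: "ws i \<noteq> []" for i using Pi_set_props(3)[OF wsP m1] .
  define C where "C i = concat (map ws [0..<i])" for i
  have CS: "C (Suc i) = C i @ ws i" for i by (simp add: C_def)
  have stC: "fst (stt st0 i) = Fstr E M1 (C i) \<rho>" for i
    by (induction i) (auto simp: C_def st0_def ws_def FW_append)
  have nzC: "Fstr E M1 (C i) \<rho> \<noteq> 0\<^sub>m d d" for i using P[of i] good_nz stC unfolding Pst_def by metis
  have lwC: "lw (C i)" for i
  proof (induction i)
    case 0 show ?case by (simp add: C_def lw_def)
  next
    case (Suc i) thus ?case using wslw[of i] by (auto simp: CS lw_def)
  qed
  have lenC: "i \<le> length (C i)" for i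
  proof (induction i)
    case 0 then show ?case by simp
  next
    case (Suc i) then show ?case using wsne[of i] by (simp add: CS) (metis length_greater_0_conv add_le_less_mono add.right_neutral Suc_le_eq)
  qed
  have Cpref: "C j ! k = C i ! k" if "k < length (C i)" "i \<le> j" for i j k
  proof -
    have "[0..<j] = [0..<i] @ [i..<j]" using that(2) by (metis le_add_diff_inverse upt_add_eq_append zero_le)
    hence "C j = C i @ concat (map ws [i..<j])" by (simp add: C_def)
    thus ?thesis using that(1) by (simp add: nth_append)
  qed
  define t where "t n = C (Suc n) ! n" for n
  have pt: "prefix t n = take n (C n)" for n
  proof (rule nth_equalityI)
    show "length (prefix t n) = length (take n (C n))" using lenC[of n] by simp
    fix k assume "k < length (prefix t n)"
    hence k: "k < n" by simp
    have "t k = C (Suc k) ! k" by (simp add: t_def)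
    also have "\<dots> = C n ! k" using Cpref[of k "Suc k" n] lenC[of "Suc k"] k by simp
    finally show "prefix t n ! k = take n (C n) ! k" using k by simp
  qed
  have nz: "Fstr E M1 (prefix t n) \<rho> \<noteq> 0\<^sub>m d d" for n
  proof
    assume z: "Fstr E M1 (prefix t n) \<rho> = 0\<^sub>m d d"
    have ld: "lw (drop n (C n))" using lwC[of n] by (auto simp: lw_def dest: in_set_dropD)
    have "Fstr E M1 (C n) \<rho> = Fstr E M1 (drop n (C n)) (Fstr E M1 (take n (C n)) \<rho>)"
      by (metis FW_append append_take_drop_id)
    also have "\<dots> = 0\<^sub>m d d" using z pt FW_zero[OF ld] by simp
    finally show False using nzC by simp
  qed
  have "t \<in> Pi_omega m d"
    unfolding Pi_omega_def
  proof (intro CollectI exI conjI allI impI)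
    show "ws i \<in> Pi_set m d" for i by (rule wsP)
    show "length (C 0) = 0" by (simp add: C_def)
    show "length (C (Suc i)) = length (C i) + length (ws i)" for i by (simp add: CS)
    fix i j assume j: "j < length (ws i)"
    have ib: "i \<le> length (C i)" by (rule lenC)
    have "t (length (C i) + j) = C (Suc (length (C i) + j)) ! (length (C i) + j)" by (simp add: t_def)
    also have "\<dots> = C (Suc i) ! (length (C i) + j)"
      using Cpref[of "length (C i) + j" "Suc i" "Suc (length (C i) + j)"] j ib by (simp add: CS)
    also have "\<dots> = ws i ! j" by (simp add: CS nth_append)
    finally show "t (length (C i) + j) = ws i ! j" .
  qed
  thus ?thesis using nz by blast
qed

end


theorem mainTheorem5:
  fixes d m :: nat
    and E :: "nat \<Rightarrow> complex mat \<Rightarrow> complex mat"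
    and M0 M1 \<rho>0 :: "complex mat"
  assumes "d \<ge> 1" and "m \<ge> 1"
    and "\<forall>k \<in> {1..m}. super_operator d (E k) \<and> trace_preserving d (E k)"
    and "M0 \<in> carrier_mat d d" and "M1 \<in> carrier_mat d d"
    and "adj M0 * M0 + adj M1 * M1 = 1\<^sub>m d"
    and "density_op d \<rho>0"
  shows "terminates_in d E M1 \<rho>0 (fair_paths m) \<longleftrightarrow> terminates_in d E M1 \<rho>0 (Pi_omega m d)"
proof -
  interpret qprog d m E M1 using assms(3,5) by unfold_locales auto
  have \<rho>: "positive_op d \<rho>0" using assms(7) by (simp add: density_op_def)
  have tr: "trace \<rho>0 = 1" using assms(7) by (simp add: density_op_def)
  have \<rho>nz: "\<rho>0 \<noteq> 0\<^sub>m d d"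
  proof
    assume "\<rho>0 = 0\<^sub>m d d"
    hence "trace \<rho>0 = 0" by (simp add: trace_def)
    thus False using tr by simp
  qed
  show ?thesis
  proof
    assume T: "terminates_in d E M1 \<rho>0 (fair_paths m)"
    show "terminates_in d E M1 \<rho>0 (Pi_omega m d)"
      using T pi_fair[OF assms(2)] unfolding terminates_in_def by blast
  next
    assume T: "terminates_in d E M1 \<rho>0 (Pi_omega m d)"
    show "terminates_in d E M1 \<rho>0 (fair_paths m)"
      unfolding terminates_in_def
    proof
      fix s assume s: "s \<in> fair_paths m"
      show "terminates_for d E M1 \<rho>0 s"
      proof (rule ccontr)
        assume nt: "\<not> terminates_for d E M1 \<rho>0 s"
        have "good \<rho>0 s"
          unfolding good_def
        proof
          fix n show "Fstr E M1 (prefix s n) \<rho>0 \<noteq> 0\<^sub>m d d"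
          proof (cases "n = 0")
            case True thus ?thesis using \<rho>nz by simp
          next
            case False thus ?thesis using nt unfolding terminates_for_def by auto
          qed
        qed
        then obtain t where t: "t \<in> Pi_omega m d" "\<forall>n. Fstr E M1 (prefix t n) \<rho>0 \<noteq> 0\<^sub>m d d"
          using fair_to_pi[OF assms(1,2) \<rho> s] by blast
        have "terminates_for d E M1 \<rho>0 t" using T t(1) unfolding terminates_in_def by blast
        thus False using t(2) unfolding terminates_for_def by blast
      qed
    qed
  qed
qed


end
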